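(* Let $G$ be a finite group with commutator subgroup $G'$. Then for each $d\in\mathbb{N}$ one has $|G'|\,E_d\in\mathbb{Z}[G']$.
   Context: $E_d=E_{G,d}:=\sum_{\chi}e_\chi$, the sum over all complex irreducible characters $\chi$ of $G$ of degree $\chi(1)=d$, where $e_\chi=\frac{\chi(1)}{|G|}\sum_{g\in G}\chi(g^{-1})g$. *)

theory Defs
  imports "HOL-Algebra.Generated_Groups" "Jordan_Normal_Form.Matrix"
begin

definition mat_trace :: "complex mat \<Rightarrow> complex" where
  "mat_trace A = (\<Sum>i<dim_row A. A $$ (i, i))"

definition is_rep :: "('a, 'b) monoid_scheme \<Rightarrow> nat \<Rightarrow> ('a \<Rightarrow> complex mat) \<Rightarrow> bool" where
  "is_rep G n \<rho> \<longleftrightarrow>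
     (\<forall>g\<in>carrier G. \<rho> g \<in> carrier_mat n n) \<and>
     (\<forall>g\<in>carrier G. \<forall>h\<in>carrier G. \<rho> (g \<otimes>\<^bsub>G\<^esub> h) = \<rho> g * \<rho> h) \<and>
     \<rho> \<one>\<^bsub>G\<^esub> = 1\<^sub>m n"

definition irreducible_rep :: "('a, 'b) monoid_scheme \<Rightarrow> nat \<Rightarrow> ('a \<Rightarrow> complex mat) \<Rightarrow> bool" where
  "irreducible_rep G n \<rho> \<longleftrightarrow> is_rep G n \<rho> \<and> n > 0 \<and>
     (\<forall>W. W \<subseteq> carrier_vec n \<and> 0\<^sub>v n \<in> W \<and>
          (\<forall>v\<in>W. \<forall>w\<in>W. v + w \<in> W) \<and>
          (\<forall>c::complex. \<forall>v\<in>W. c \<cdot>\<^sub>v v \<in> W) \<and>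
          (\<forall>g\<in>carrier G. \<forall>v\<in>W. \<rho> g *\<^sub>v v \<in> W)
        \<longrightarrow> W = {0\<^sub>v n} \<or> W = carrier_vec n)"

definition character :: "('a, 'b) monoid_scheme \<Rightarrow> ('a \<Rightarrow> complex mat) \<Rightarrow> 'a \<Rightarrow> complex" where
  "character G \<rho> = (\<lambda>g. if g \<in> carrier G then mat_trace (\<rho> g) else 0)"

definition irr_chars :: "('a, 'b) monoid_scheme \<Rightarrow> ('a \<Rightarrow> complex) set" where
  "irr_chars G = {\<chi>. \<exists>n \<rho>. irreducible_rep G n \<rho> \<and> \<chi> = character G \<rho>}"

text \<open>Elements of the group algebra C[G] are represented by their coefficient functions
  carrier G \<rightarrow> C.  The coefficient at g of
  e_chi = chi(1)/|G| * sum_h chi(h^-1) h  is  chi(1)/|G| * chi(g^-1).\<close>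
definition central_idem :: "('a, 'b) monoid_scheme \<Rightarrow> ('a \<Rightarrow> complex) \<Rightarrow> 'a \<Rightarrow> complex" where
  "central_idem G \<chi> g = \<chi> \<one>\<^bsub>G\<^esub> / of_nat (order G) * \<chi> (inv\<^bsub>G\<^esub> g)"

definition E_deg :: "('a, 'b) monoid_scheme \<Rightarrow> nat \<Rightarrow> 'a \<Rightarrow> complex" where
  "E_deg G d g = (\<Sum>\<chi>\<in>{\<chi>\<in>irr_chars G. \<chi> \<one>\<^bsub>G\<^esub> = of_nat d}. central_idem G \<chi> g)"

end

theory Submission
  imports Defs "Jordan_Normal_Form.Schur_Decomposition"
begin

lemma mat_trace_mult_comm:
  assumes A: "A \<in> carrier_mat n m" and B: "B \<in> carrier_mat m n"
  shows "mat_trace (A * B) = mat_trace (B * A)"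
proof -
  have "mat_trace (A * B) = (\<Sum>i<n. \<Sum>k<m. A $$ (i,k) * B $$ (k,i))"
    unfolding mat_trace_def using A B
    by (auto simp: scalar_prod_def atLeast0LessThan intro!: sum.cong)
  also have "\<dots> = (\<Sum>k<m. \<Sum>i<n. B $$ (k,i) * A $$ (i,k))"
    by (subst sum.swap) (simp add: mult.commute)
  also have "\<dots> = mat_trace (B * A)"
    unfolding mat_trace_def using A B
    by (auto simp: scalar_prod_def atLeast0LessThan intro!: sum.cong)
  finally show ?thesis .
qed

lemma mat_trace_one[simp]: "mat_trace (1\<^sub>m n) = of_nat n"
  unfolding mat_trace_def by simp

lemma mat_trace_smult: "A \<in> carrier_mat n n \<Longrightarrow> mat_trace (c \<cdot>\<^sub>m A) = c * mat_trace A"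
  unfolding mat_trace_def by (simp add: sum_distrib_left)

locale fgrp = group +
  assumes fin: "finite (carrier G)"
begin

lemma rep_carrier: "is_rep G n \<rho> \<Longrightarrow> g \<in> carrier G \<Longrightarrow> \<rho> g \<in> carrier_mat n n"
  unfolding is_rep_def by auto

lemma rep_mult: "is_rep G n \<rho> \<Longrightarrow> g \<in> carrier G \<Longrightarrow> h \<in> carrier G \<Longrightarrow> \<rho> (g \<otimes> h) = \<rho> g * \<rho> h"
  unfolding is_rep_def by auto

lemma rep_one: "is_rep G n \<rho> \<Longrightarrow> \<rho> \<one> = 1\<^sub>m n"
  unfolding is_rep_def by auto

lemma rep_inv1: "is_rep G n \<rho> \<Longrightarrow> g \<in> carrier G \<Longrightarrow> \<rho> (inv g) * \<rho> g = 1\<^sub>m n"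
  by (metis inv_closed l_inv rep_mult rep_one)

lemma rep_inv2: "is_rep G n \<rho> \<Longrightarrow> g \<in> carrier G \<Longrightarrow> \<rho> g * \<rho> (inv g) = 1\<^sub>m n"
  by (metis inv_closed r_inv rep_mult rep_one)

lemma char_one: "is_rep G n \<rho> \<Longrightarrow> character G \<rho> \<one> = of_nat n"
  unfolding character_def by (simp add: rep_one)

lemma char_conj:
  assumes r: "is_rep G n \<rho>" and x: "x \<in> carrier G" and g: "g \<in> carrier G"
  shows "character G \<rho> (x \<otimes> g \<otimes> inv x) = character G \<rho> g"
proof -
  have "mat_trace (\<rho> (x \<otimes> g \<otimes> inv x)) = mat_trace (\<rho> x * (\<rho> g * \<rho> (inv x)))"
    using r x g by (simp add: rep_mult assoc_mult_mat[OF rep_carrier rep_carrier rep_carrier])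
  also have "\<dots> = mat_trace ((\<rho> g * \<rho> (inv x)) * \<rho> x)"
    using r x g by (intro mat_trace_mult_comm[of _ n n]) (auto intro!: rep_carrier mult_carrier_mat[of _ n n _ n])
  also have "\<dots> = mat_trace (\<rho> g)"
    using r x g by (simp add: assoc_mult_mat[OF rep_carrier rep_carrier rep_carrier] rep_inv1
       right_mult_one_mat[OF rep_carrier])
  finally show ?thesis unfolding character_def using x g by simp
qed

lemma char_comm:
  assumes r: "is_rep G n \<rho>" and x: "x \<in> carrier G" and g: "g \<in> carrier G"
  shows "character G \<rho> (x \<otimes> g) = character G \<rho> (g \<otimes> x)"
proof -
  have "character G \<rho> (x \<otimes> (g \<otimes> x) \<otimes> inv x) = character G \<rho> (g \<otimes> x)"
    using char_conj[OF r x] x g by simp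
  moreover have "x \<otimes> (g \<otimes> x) \<otimes> inv x = x \<otimes> g"
    using x g by (simp add: m_assoc)
  ultimately show ?thesis by simp
qed

end

lemma mat_eq_by_vecs:
  fixes A B :: "'a::comm_ring_1 mat"
  assumes A: "A \<in> carrier_mat n m" and B: "B \<in> carrier_mat n m"
    and h: "\<And>v. v \<in> carrier_vec m \<Longrightarrow> A *\<^sub>v v = B *\<^sub>v v"
  shows "A = B"
proof (rule eq_matI)
  fix i j assume i: "i < dim_row B" and j: "j < dim_col B"
  have "A $$ (i,j) = (A *\<^sub>v unit_vec m j) $ i" using A B i j by (simp add: mult_mat_vec_def)
  also have "\<dots> = (B *\<^sub>v unit_vec m j) $ i" using h by simp
  also have "\<dots> = B $$ (i,j)" using A B i j by (simp add: mult_mat_vec_def)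
  finally show "A $$ (i,j) = B $$ (i,j)" .
qed (use A B in auto)

lemma mat_eq_zero_by_vecs:
  fixes A :: "'a::comm_ring_1 mat"
  assumes A: "A \<in> carrier_mat n m" and h: "\<And>v. v \<in> carrier_vec m \<Longrightarrow> A *\<^sub>v v = 0\<^sub>v n"
  shows "A = 0\<^sub>m n m"
  by (rule mat_eq_by_vecs[OF A]) (use h in auto)

definition inv_sub :: "('a, 'b) monoid_scheme \<Rightarrow> nat \<Rightarrow> ('a \<Rightarrow> complex mat) \<Rightarrow> complex vec set \<Rightarrow> bool" where
  "inv_sub G n \<rho> W \<longleftrightarrow> W \<subseteq> carrier_vec n \<and> 0\<^sub>v n \<in> W \<and>
          (\<forall>v\<in>W. \<forall>w\<in>W. v + w \<in> W) \<and>
          (\<forall>c::complex. \<forall>v\<in>W. c \<cdot>\<^sub>v v \<in> W) \<and>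
          (\<forall>g\<in>carrier G. \<forall>v\<in>W. \<rho> g *\<^sub>v v \<in> W)"

lemma irr_sub: "irreducible_rep G n \<rho> \<Longrightarrow> inv_sub G n \<rho> W \<Longrightarrow> W = {0\<^sub>v n} \<or> W = carrier_vec n"
  unfolding irreducible_rep_def inv_sub_def by blast

lemma irr_rep: "irreducible_rep G n \<rho> \<Longrightarrow> is_rep G n \<rho>"
  unfolding irreducible_rep_def by blast

lemma irr_pos: "irreducible_rep G n \<rho> \<Longrightarrow> n > 0"
  unfolding irreducible_rep_def by blast

lemma not_irr: "is_rep G n \<rho> \<Longrightarrow> n > 0 \<Longrightarrow> \<not> irreducible_rep G n \<rho> \<Longrightarrow>
   \<exists>W. inv_sub G n \<rho> W \<and> W \<noteq> {0\<^sub>v n} \<and> W \<noteq> carrier_vec n"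
  unfolding irreducible_rep_def inv_sub_def by blast

context fgrp
begin

lemma schur_scalar:
  assumes irr: "irreducible_rep G n \<rho>" and M: "M \<in> carrier_mat n n"
    and comm: "\<And>g. g \<in> carrier G \<Longrightarrow> M * \<rho> g = \<rho> g * M"
  shows "\<exists>c. M = c \<cdot>\<^sub>m 1\<^sub>m n"
proof -
  have r: "is_rep G n \<rho>" and n: "n > 0" using irr irr_rep irr_pos by auto
  obtain as where cp: "char_poly M = prod_list (map (\<lambda>a. pCons (- a) (pCons 1 0)) as)" and len: "length as = n"
    using char_poly_factorized[OF M] by blast
  define \<mu> where "\<mu> = hd as"
  obtain a as' where aas: "as = a # as'" using len n by (cases as) auto
  have "poly (char_poly M) \<mu> = 0" unfolding cp \<mu>_def aas by simp
  then have "eigenvalue M \<mu>" using eigenvalue_root_char_poly[OF M] by simp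
  then obtain v where v: "v \<in> carrier_vec n" "v \<noteq> 0\<^sub>v n" "M *\<^sub>v v = \<mu> \<cdot>\<^sub>v v"
    unfolding eigenvalue_def eigenvector_def using M by auto
  define W where "W = {v \<in> carrier_vec n. M *\<^sub>v v = \<mu> \<cdot>\<^sub>v v}"
  have "inv_sub G n \<rho> W"
    unfolding inv_sub_def W_def
  proof (intro conjI ballI allI)
    fix x y assume x: "x \<in> {v \<in> carrier_vec n. M *\<^sub>v v = \<mu> \<cdot>\<^sub>v v}" and y: "y \<in> {v \<in> carrier_vec n. M *\<^sub>v v = \<mu> \<cdot>\<^sub>v v}"
    then show "x + y \<in> {v \<in> carrier_vec n. M *\<^sub>v v = \<mu> \<cdot>\<^sub>v v}"
      using M by (auto simp: mult_add_distrib_mat_vec smult_add_distrib_vec[of _ n])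
  next
    fix c :: complex and x assume x: "x \<in> {v \<in> carrier_vec n. M *\<^sub>v v = \<mu> \<cdot>\<^sub>v v}"
    then show "c \<cdot>\<^sub>v x \<in> {v \<in> carrier_vec n. M *\<^sub>v v = \<mu> \<cdot>\<^sub>v v}"
      using M by (auto simp: mult_mat_vec smult_smult_assoc mult.commute)
  next
    fix g x assume g: "g \<in> carrier G" and x: "x \<in> {v \<in> carrier_vec n. M *\<^sub>v v = \<mu> \<cdot>\<^sub>v v}"
    have rg: "\<rho> g \<in> carrier_mat n n" using rep_carrier[OF r g] .
    have "M *\<^sub>v (\<rho> g *\<^sub>v x) = (M * \<rho> g) *\<^sub>v x" using M rg x by auto
    also have "\<dots> = (\<rho> g * M) *\<^sub>v x" using comm g by simp
    also have "\<dots> = \<rho> g *\<^sub>v (\<mu> \<cdot>\<^sub>v x)" using M rg x by auto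
    also have "\<dots> = \<mu> \<cdot>\<^sub>v (\<rho> g *\<^sub>v x)" using rg x by (auto simp: mult_mat_vec)
    finally show "\<rho> g *\<^sub>v x \<in> {v \<in> carrier_vec n. M *\<^sub>v v = \<mu> \<cdot>\<^sub>v v}" using rg x by auto
  qed (use M in auto)
  moreover have "W \<noteq> {0\<^sub>v n}" using v unfolding W_def by auto
  ultimately have W: "W = carrier_vec n" using irr_sub[OF irr] by blast
  have "M = \<mu> \<cdot>\<^sub>m 1\<^sub>m n"
  proof (rule mat_eq_by_vecs[OF M])
    fix x :: "complex vec" assume x: "x \<in> carrier_vec n"
    then have "M *\<^sub>v x = \<mu> \<cdot>\<^sub>v x" using W unfolding W_def by auto
    also have "\<dots> = (\<mu> \<cdot>\<^sub>m 1\<^sub>m n) *\<^sub>v x" using x by (intro eq_vecI) (auto simp: mult_mat_vec_def)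
    finally show "M *\<^sub>v x = (\<mu> \<cdot>\<^sub>m 1\<^sub>m n) *\<^sub>v x" .
  qed auto
  then show ?thesis by blast
qed

lemma schur_zero:
  assumes irr1: "irreducible_rep G m \<rho>" and irr2: "irreducible_rep G n \<sigma>"
    and T: "T \<in> carrier_mat n m"
    and comm: "\<And>g. g \<in> carrier G \<Longrightarrow> T * \<rho> g = \<sigma> g * T"
    and ne: "character G \<rho> \<noteq> character G \<sigma>"
  shows "T = 0\<^sub>m n m"
proof (rule ccontr)
  assume Tnz: "T \<noteq> 0\<^sub>m n m"
  have r1: "is_rep G m \<rho>" and r2: "is_rep G n \<sigma>" using irr1 irr2 irr_rep by auto
  define K where "K = {v \<in> carrier_vec m. T *\<^sub>v v = 0\<^sub>v n}"
  have "inv_sub G m \<rho> K"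
    unfolding inv_sub_def K_def
  proof (intro conjI ballI allI)
    fix x y assume "x \<in> {v \<in> carrier_vec m. T *\<^sub>v v = 0\<^sub>v n}" "y \<in> {v \<in> carrier_vec m. T *\<^sub>v v = 0\<^sub>v n}"
    then show "x + y \<in> {v \<in> carrier_vec m. T *\<^sub>v v = 0\<^sub>v n}"
      using T by (auto simp: mult_add_distrib_mat_vec)
  next
    fix c :: complex and x assume "x \<in> {v \<in> carrier_vec m. T *\<^sub>v v = 0\<^sub>v n}"
    then show "c \<cdot>\<^sub>v x \<in> {v \<in> carrier_vec m. T *\<^sub>v v = 0\<^sub>v n}"
      using T by (auto simp: mult_mat_vec)
  next
    fix g x assume g: "g \<in> carrier G" and x: "x \<in> {v \<in> carrier_vec m. T *\<^sub>v v = 0\<^sub>v n}"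
    have rg: "\<rho> g \<in> carrier_mat m m" "\<sigma> g \<in> carrier_mat n n"
      using rep_carrier[OF r1 g] rep_carrier[OF r2 g] .
    have "T *\<^sub>v (\<rho> g *\<^sub>v x) = (T * \<rho> g) *\<^sub>v x" using T rg x by auto
    also have "\<dots> = (\<sigma> g * T) *\<^sub>v x" using comm g by simp
    also have "\<dots> = 0\<^sub>v n" using T rg x by auto
    finally show "\<rho> g *\<^sub>v x \<in> {v \<in> carrier_vec m. T *\<^sub>v v = 0\<^sub>v n}" using rg x by auto
  qed (use T in auto)
  moreover have "K \<noteq> carrier_vec m"
  proof
    assume "K = carrier_vec m"
    then have "T = 0\<^sub>m n m" by (intro mat_eq_zero_by_vecs[OF T]) (simp add: K_def set_eq_iff, blast)
    with Tnz show False by simp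
  qed
  ultimately have K: "K = {0\<^sub>v m}" using irr_sub[OF irr1] by blast
  define I where "I = {T *\<^sub>v v | v. v \<in> carrier_vec m}"
  have "inv_sub G n \<sigma> I"
    unfolding inv_sub_def I_def
  proof (intro conjI ballI allI)
    fix x y assume "x \<in> {T *\<^sub>v v | v. v \<in> carrier_vec m}" "y \<in> {T *\<^sub>v v | v. v \<in> carrier_vec m}"
    then obtain a b where "a \<in> carrier_vec m" "b \<in> carrier_vec m" "x = T *\<^sub>v a" "y = T *\<^sub>v b" by auto
    then show "x + y \<in> {T *\<^sub>v v | v. v \<in> carrier_vec m}"
      using T by (auto simp: mult_add_distrib_mat_vec intro!: exI[of _ "a + b"])
  next
    fix c :: complex and x assume "x \<in> {T *\<^sub>v v | v. v \<in> carrier_vec m}"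
    then obtain a where "a \<in> carrier_vec m" "x = T *\<^sub>v a" by auto
    then show "c \<cdot>\<^sub>v x \<in> {T *\<^sub>v v | v. v \<in> carrier_vec m}"
      using T by (auto simp: mult_mat_vec intro!: exI[of _ "c \<cdot>\<^sub>v a"])
  next
    fix g x assume g: "g \<in> carrier G" and "x \<in> {T *\<^sub>v v | v. v \<in> carrier_vec m}"
    then obtain a where a: "a \<in> carrier_vec m" "x = T *\<^sub>v a" by auto
    have rg: "\<rho> g \<in> carrier_mat m m" "\<sigma> g \<in> carrier_mat n n"
      using rep_carrier[OF r1 g] rep_carrier[OF r2 g] .
    have "\<sigma> g *\<^sub>v x = (\<sigma> g * T) *\<^sub>v a" using T rg a by auto
    also have "\<dots> = (T * \<rho> g) *\<^sub>v a" using comm g by simp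
    also have "\<dots> = T *\<^sub>v (\<rho> g *\<^sub>v a)" using T rg a by auto
    finally show "\<sigma> g *\<^sub>v x \<in> {T *\<^sub>v v | v. v \<in> carrier_vec m}" using rg a by auto
  next
    show "0\<^sub>v n \<in> {T *\<^sub>v v | v. v \<in> carrier_vec m}"
      using T by (auto intro!: exI[of _ "0\<^sub>v m"])
  qed (use T in auto)
  moreover have "I \<noteq> {0\<^sub>v n}"
  proof
    assume "I = {0\<^sub>v n}"
    then have "T = 0\<^sub>m n m" by (intro mat_eq_zero_by_vecs[OF T]) (simp add: I_def set_eq_iff, blast)
    with Tnz show False by simp
  qed
  ultimately have I: "I = carrier_vec n" using irr_sub[OF irr2] by blast
  have inj: "\<And>v. v \<in> carrier_vec m \<Longrightarrow> T *\<^sub>v v = 0\<^sub>v n \<Longrightarrow> v = 0\<^sub>v m"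
    using K unfolding K_def by auto
  have pre: "\<And>j. j < n \<Longrightarrow> \<exists>v. v \<in> carrier_vec m \<and> T *\<^sub>v v = unit_vec n j"
  proof -
    fix j assume "j < n"
    have "unit_vec n j \<in> I" using I by simp
    then show "\<exists>v. v \<in> carrier_vec m \<and> T *\<^sub>v v = unit_vec n j" unfolding I_def by auto
  qed
  define S where "S = mat m n (\<lambda>(i,j). (SOME v. v \<in> carrier_vec m \<and> T *\<^sub>v v = unit_vec n j) $ i)"
  have S: "S \<in> carrier_mat m n" unfolding S_def by auto
  define sv where "sv = (\<lambda>j. SOME v. v \<in> carrier_vec m \<and> T *\<^sub>v v = unit_vec n j)"
  have sv: "\<And>j. j < n \<Longrightarrow> sv j \<in> carrier_vec m \<and> T *\<^sub>v sv j = unit_vec n j"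
    unfolding sv_def by (rule someI_ex, rule pre)
  have colS: "\<And>j. j < n \<Longrightarrow> col S j = sv j"
  proof -
    fix j assume j: "j < n"
    have d: "dim_vec (sv j) = m" using sv[OF j] by (simp add: carrier_vecD)
    show "col S j = sv j"
    proof (rule eq_vecI)
      fix i assume "i < dim_vec (sv j)"
      then have i: "i < m" using d by simp
      show "col S j $ i = sv j $ i" using i j by (simp add: S_def sv_def)
    next
      show "dim_vec (col S j) = dim_vec (sv j)" using d by (simp add: S_def)
    qed
  qed
  have TS: "T * S = 1\<^sub>m n"
  proof (rule eq_matI)
    fix i j assume i: "i < dim_row (1\<^sub>m n)" and j: "j < dim_col (1\<^sub>m n)"
    have i': "i < n" and j': "j < n" using i j by simp_all
    have "(T * S) $$ (i,j) = row T i \<bullet> col S j" using T S i' j' by (simp add: index_mult_mat)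
    also have "\<dots> = (T *\<^sub>v sv j) $ i" using T i' j' colS[OF j'] by (simp add: index_mult_mat_vec)
    also have "\<dots> = unit_vec n j $ i" using sv[OF j'] by simp
    also have "\<dots> = 1\<^sub>m n $$ (i,j)" using i' j' by simp
    finally show "(T * S) $$ (i,j) = 1\<^sub>m n $$ (i,j)" .
  next
    show "dim_row (T * S) = dim_row (1\<^sub>m n)" using T by simp
    show "dim_col (T * S) = dim_col (1\<^sub>m n)" using S by simp
  qed
  have STc: "S * T \<in> carrier_mat m m" using S T by simp
  have ST: "S * T = 1\<^sub>m m"
  proof (rule mat_eq_by_vecs[OF STc])
    fix v :: "complex vec" assume v: "v \<in> carrier_vec m"
    have STv: "(S * T) *\<^sub>v v \<in> carrier_vec m" using STc v by simp
    have "T *\<^sub>v ((S * T) *\<^sub>v v) = T *\<^sub>v (S *\<^sub>v (T *\<^sub>v v))"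
      by (simp only: assoc_mult_mat_vec[OF S T v])
    also have "\<dots> = (T * S) *\<^sub>v (T *\<^sub>v v)"
      using T S v by (simp add: assoc_mult_mat_vec[of T n m S n])
    also have "\<dots> = T *\<^sub>v v" using TS T v by simp
    finally have e: "T *\<^sub>v ((S * T) *\<^sub>v v) = T *\<^sub>v v" .
    have "T *\<^sub>v ((S * T) *\<^sub>v v - v) = T *\<^sub>v ((S * T) *\<^sub>v v) - T *\<^sub>v v"
      using T STv v by (rule mult_minus_distrib_mat_vec)
    also have "\<dots> = 0\<^sub>v n" using e T v by simp
    finally have "(S * T) *\<^sub>v v - v = 0\<^sub>v m" using inj STv v by simp
    then have z: "\<And>i. i < m \<Longrightarrow> ((S * T) *\<^sub>v v - v) $ i = 0" by simp
    have "(S * T) *\<^sub>v v = v"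
    proof (rule eq_vecI)
      fix i assume "i < dim_vec v"
      then have i: "i < m" using v by simp
      show "((S * T) *\<^sub>v v) $ i = v $ i" using z[OF i] i v STv by simp
    qed (use S v in simp)
    then show "(S * T) *\<^sub>v v = 1\<^sub>m m *\<^sub>v v" using v by simp
  qed simp
  have "character G \<rho> = character G \<sigma>"
  proof
    fix g show "character G \<rho> g = character G \<sigma> g"
    proof (cases "g \<in> carrier G")
      case g: True
      have rg: "\<rho> g \<in> carrier_mat m m" "\<sigma> g \<in> carrier_mat n n"
        using rep_carrier[OF r1 g] rep_carrier[OF r2 g] .
      have "mat_trace (\<sigma> g) = mat_trace (\<sigma> g * (T * S))" using TS rg by simp
      also have "\<sigma> g * (T * S) = (T * \<rho> g) * S"
        by (simp only: assoc_mult_mat[OF rg(2) T S, symmetric] comm[OF g])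
      also have "mat_trace \<dots> = mat_trace (S * (T * \<rho> g))"
        using rg T S by (intro mat_trace_mult_comm[of _ n m]) auto
      also have "S * (T * \<rho> g) = \<rho> g"
        by (simp only: assoc_mult_mat[OF S T rg(1), symmetric] ST left_mult_one_mat[OF rg(1)])
      finally show ?thesis unfolding character_def using g by simp
    qed (simp add: character_def)
  qed
  with ne show False by simp
qed

end

lemma mat_mult_entry:
  assumes "A \<in> carrier_mat n k" "B \<in> carrier_mat k m" "i < n" "j < m"
  shows "(A * B) $$ (i,j) = (\<Sum>c<k. A $$ (i,c) * B $$ (c,j))"
  using assms by (simp add: index_mult_mat scalar_prod_def atLeast0LessThan)

context fgrp
begin

lemma sum_lmult: "g \<in> carrier G \<Longrightarrow> (\<Sum>h\<in>carrier G. f (g \<otimes> h)) = (\<Sum>h\<in>carrier G. f h)"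
  by (rule sum.reindex_bij_witness[of _ "\<lambda>h. inv g \<otimes> h" "\<lambda>h. g \<otimes> h"])
     (auto simp: m_assoc[symmetric])

lemma sum_rmult: "g \<in> carrier G \<Longrightarrow> (\<Sum>h\<in>carrier G. f (h \<otimes> g)) = (\<Sum>h\<in>carrier G. f h)"
  by (rule sum.reindex_bij_witness[of _ "\<lambda>h. h \<otimes> inv g" "\<lambda>h. h \<otimes> g"])
     (auto simp: m_assoc)

lemma sum_inv: "(\<Sum>h\<in>carrier G. f (inv h)) = (\<Sum>h\<in>carrier G. f h)"
  by (rule sum.reindex_bij_witness[of _ "\<lambda>h. inv h" "\<lambda>h. inv h"]) auto

lemma rep_entry:
  assumes r: "is_rep G n \<rho>" and x: "x \<in> carrier G" and y: "y \<in> carrier G" and i: "i < n" and j: "j < n"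
  shows "\<rho> (x \<otimes> y) $$ (i,j) = (\<Sum>c<n. \<rho> x $$ (i,c) * \<rho> y $$ (c,j))"
  using rep_mult[OF r x y] mat_mult_entry[OF rep_carrier[OF r x] rep_carrier[OF r y] i j] by simp

definition imat :: "('a \<Rightarrow> complex mat) \<Rightarrow> ('a \<Rightarrow> complex mat) \<Rightarrow> nat \<Rightarrow> nat \<Rightarrow> nat \<Rightarrow> nat \<Rightarrow> complex mat" where
  "imat \<rho> \<sigma> m n i k = mat n m (\<lambda>(a,b). \<Sum>h\<in>carrier G. \<sigma> h $$ (a,i) * \<rho> (inv h) $$ (k,b))"

lemma imat_carrier: "imat \<rho> \<sigma> m n i k \<in> carrier_mat n m"
  unfolding imat_def by simp

lemma imat_comm:
  assumes r: "is_rep G m \<rho>" and s: "is_rep G n \<sigma>" and g: "g \<in> carrier G" and i: "i < n" and k: "k < m"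
  shows "imat \<rho> \<sigma> m n i k * \<rho> g = \<sigma> g * imat \<rho> \<sigma> m n i k"
proof (rule eq_matI)
  fix a b assume a: "a < dim_row (\<sigma> g * imat \<rho> \<sigma> m n i k)" and b: "b < dim_col (\<sigma> g * imat \<rho> \<sigma> m n i k)"
  have a': "a < n" and b': "b < m" using a b rep_carrier[OF s g] imat_carrier[of \<rho> \<sigma> m n i k] by auto
  have "(imat \<rho> \<sigma> m n i k * \<rho> g) $$ (a,b) = (\<Sum>c<m. imat \<rho> \<sigma> m n i k $$ (a,c) * \<rho> g $$ (c,b))"
    by (rule mat_mult_entry[OF imat_carrier rep_carrier[OF r g] a' b'])
  also have "\<dots> = (\<Sum>c<m. \<Sum>h\<in>carrier G. \<sigma> h $$ (a,i) * \<rho> (inv h) $$ (k,c) * \<rho> g $$ (c,b))"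
    using a' by (simp add: imat_def sum_distrib_right)
  also have "\<dots> = (\<Sum>h\<in>carrier G. \<sigma> h $$ (a,i) * (\<Sum>c<m. \<rho> (inv h) $$ (k,c) * \<rho> g $$ (c,b)))"
    by (subst sum.swap) (simp add: sum_distrib_left mult.assoc)
  also have "\<dots> = (\<Sum>h\<in>carrier G. \<sigma> h $$ (a,i) * \<rho> (inv h \<otimes> g) $$ (k,b))"
    using rep_entry[OF r _ g k b'] by simp
  finally have L: "(imat \<rho> \<sigma> m n i k * \<rho> g) $$ (a,b) = (\<Sum>h\<in>carrier G. \<sigma> h $$ (a,i) * \<rho> (inv h \<otimes> g) $$ (k,b))" .
  have "(\<sigma> g * imat \<rho> \<sigma> m n i k) $$ (a,b) = (\<Sum>c<n. \<sigma> g $$ (a,c) * imat \<rho> \<sigma> m n i k $$ (c,b))"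
    by (rule mat_mult_entry[OF rep_carrier[OF s g] imat_carrier a' b'])
  also have "\<dots> = (\<Sum>c<n. \<Sum>h\<in>carrier G. \<sigma> g $$ (a,c) * \<sigma> h $$ (c,i) * \<rho> (inv h) $$ (k,b))"
    using b' by (simp add: imat_def sum_distrib_left mult.assoc)
  also have "\<dots> = (\<Sum>h\<in>carrier G. (\<Sum>c<n. \<sigma> g $$ (a,c) * \<sigma> h $$ (c,i)) * \<rho> (inv h) $$ (k,b))"
    by (subst sum.swap) (simp add: sum_distrib_right)
  also have "\<dots> = (\<Sum>h\<in>carrier G. \<sigma> (g \<otimes> h) $$ (a,i) * \<rho> (inv h) $$ (k,b))"
    using rep_entry[OF s g _ a' i] by simp
  also have "\<dots> = (\<Sum>h\<in>carrier G. \<sigma> (g \<otimes> (inv g \<otimes> h)) $$ (a,i) * \<rho> (inv (inv g \<otimes> h)) $$ (k,b))"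
    using sum_lmult[of "inv g" "\<lambda>h. \<sigma> (g \<otimes> h) $$ (a,i) * \<rho> (inv h) $$ (k,b)"] g by simp
  also have "\<dots> = (\<Sum>h\<in>carrier G. \<sigma> h $$ (a,i) * \<rho> (inv h \<otimes> g) $$ (k,b))"
    using g by (intro sum.cong refl) (simp add: m_assoc[symmetric] inv_mult_group)
  finally show "(imat \<rho> \<sigma> m n i k * \<rho> g) $$ (a,b) = (\<sigma> g * imat \<rho> \<sigma> m n i k) $$ (a,b)"
    using L by simp
qed (use rep_carrier[OF s g] rep_carrier[OF r g] imat_carrier[of \<rho> \<sigma> m n i k] in auto)

lemma schur_orth1:
  assumes irr: "irreducible_rep G m \<rho>" and a: "a < m" and b: "b < m" and i: "i < m" and k: "k < m"
  shows "(\<Sum>h\<in>carrier G. \<rho> h $$ (a,i) * \<rho> (inv h) $$ (k,b)) =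
    (if a = b \<and> k = i then of_nat (card (carrier G)) / of_nat m else 0)"
proof -
  have r: "is_rep G m \<rho>" and m: "m > 0" using irr irr_rep irr_pos by auto
  obtain c where c: "imat \<rho> \<rho> m m i k = c \<cdot>\<^sub>m 1\<^sub>m m"
    using schur_scalar[OF irr imat_carrier] imat_comm[OF r r _ i k] by blast
  have "mat_trace (imat \<rho> \<rho> m m i k) = (\<Sum>a<m. \<Sum>h\<in>carrier G. \<rho> h $$ (a,i) * \<rho> (inv h) $$ (k,a))"
    unfolding mat_trace_def imat_def by simp
  also have "\<dots> = (\<Sum>h\<in>carrier G. \<Sum>a<m. \<rho> (inv h) $$ (k,a) * \<rho> h $$ (a,i))"
    by (subst sum.swap) (simp add: mult.commute)
  also have "\<dots> = (\<Sum>h\<in>carrier G. (if k = i then 1 else 0))"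
  proof (intro sum.cong refl)
    fix h assume h: "h \<in> carrier G"
    have "(\<Sum>a<m. \<rho> (inv h) $$ (k,a) * \<rho> h $$ (a,i)) = \<rho> (inv h \<otimes> h) $$ (k,i)"
      using rep_entry[OF r inv_closed[OF h] h k i] by simp
    also have "\<dots> = (if k = i then 1 else 0)" using h rep_one[OF r] k i by simp
    finally show "(\<Sum>a<m. \<rho> (inv h) $$ (k,a) * \<rho> h $$ (a,i)) = (if k = i then 1 else 0)" .
  qed
  finally have tr: "mat_trace (imat \<rho> \<rho> m m i k) = (if k = i then of_nat (card (carrier G)) else 0)"
    by simp
  have "mat_trace (imat \<rho> \<rho> m m i k) = c * of_nat m" unfolding c
    by (simp add: mat_trace_smult[of _ m])
  with tr have cval: "c = (if k = i then of_nat (card (carrier G)) / of_nat m else 0)"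
    using m by (auto simp: field_simps split: if_splits)
  have "(\<Sum>h\<in>carrier G. \<rho> h $$ (a,i) * \<rho> (inv h) $$ (k,b)) = imat \<rho> \<rho> m m i k $$ (a,b)"
    unfolding imat_def using a b by simp
  also have "\<dots> = (if a = b then c else 0)" unfolding c using a b by simp
  finally show ?thesis using cval by simp
qed

lemma schur_orth2:
  assumes irr1: "irreducible_rep G m \<rho>" and irr2: "irreducible_rep G n \<sigma>"
    and ne: "character G \<rho> \<noteq> character G \<sigma>"
    and a: "a < n" and b: "b < m" and i: "i < n" and k: "k < m"
  shows "(\<Sum>h\<in>carrier G. \<sigma> h $$ (a,i) * \<rho> (inv h) $$ (k,b)) = 0"
proof -
  have r: "is_rep G m \<rho>" and s: "is_rep G n \<sigma>" using irr1 irr2 irr_rep by auto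
  have "imat \<rho> \<sigma> m n i k = 0\<^sub>m n m"
    by (rule schur_zero[OF irr1 irr2 imat_carrier _ ne]) (rule imat_comm[OF r s _ i k])
  then have "imat \<rho> \<sigma> m n i k $$ (a,b) = 0" using a b by simp
  then show ?thesis unfolding imat_def using a b by simp
qed

end

lemma if0_mult1[simp]: "(if P then x else 0) * y = (if P then x * y else (0::'a::mult_zero))"
  by simp
lemma if0_mult2[simp]: "y * (if P then x else 0) = (if P then y * x else (0::'a::mult_zero))"
  by simp
lemma conj_sym_eq: "(j = k \<and> k = j) = (k = j)" by auto

context fgrp
begin

abbreviation ng where "ng \<equiv> card (carrier G)"

lemma ng_pos: "ng > 0"
  using fin by (metis card_gt_0_iff empty_iff one_closed)

lemma order_eq: "Coset.order G = ng" by (simp add: Coset.order_def)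

definition conv :: "('a \<Rightarrow> complex) \<Rightarrow> ('a \<Rightarrow> complex) \<Rightarrow> 'a \<Rightarrow> complex" where
  "conv f h g = (\<Sum>x\<in>carrier G. f x * h (inv x \<otimes> g))"

definition ccomm :: "'a \<Rightarrow> complex" where
  "ccomm z = (\<Sum>a\<in>carrier G. \<Sum>b\<in>carrier G. if a \<otimes> b \<otimes> inv a \<otimes> inv b = z then 1 else 0)"

lemma char_entry: "is_rep G n \<rho> \<Longrightarrow> g \<in> carrier G \<Longrightarrow> character G \<rho> g = (\<Sum>i<n. \<rho> g $$ (i,i))"
  unfolding character_def mat_trace_def using rep_carrier by auto

lemma cidem_eq: "is_rep G n \<rho> \<Longrightarrow> central_idem G (character G \<rho>) g = of_nat n / of_nat ng * character G \<rho> (inv g)"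
  unfolding central_idem_def by (simp add: char_one order_eq)

lemma lemma_K:
  assumes irr1: "irreducible_rep G m \<rho>" and irr2: "irreducible_rep G n \<sigma>" and i: "i < n" and j: "j < n"
  shows "(\<Sum>h\<in>carrier G. character G \<rho> (inv h) * \<sigma> h $$ (i,j)) =
    (if character G \<rho> = character G \<sigma> then (if i = j then of_nat ng / of_nat n else 0) else 0)"
proof (cases "character G \<rho> = character G \<sigma>")
  case True
  have s: "is_rep G n \<sigma>" using irr2 irr_rep by auto
  have "(\<Sum>h\<in>carrier G. character G \<rho> (inv h) * \<sigma> h $$ (i,j)) =
        (\<Sum>h\<in>carrier G. \<Sum>k<n. \<sigma> h $$ (i,j) * \<sigma> (inv h) $$ (k,k))"
    unfolding True by (intro sum.cong refl) (simp add: char_entry[OF s] sum_distrib_left mult.commute)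
  also have "\<dots> = (\<Sum>k<n. \<Sum>h\<in>carrier G. \<sigma> h $$ (i,j) * \<sigma> (inv h) $$ (k,k))"
    by (rule sum.swap)
  also have "\<dots> = (\<Sum>k<n. if i = k \<and> k = j then of_nat ng / of_nat n else 0)"
    using schur_orth1[OF irr2 i _ j] by (intro sum.cong refl) auto
  also have "\<dots> = (if i = j then of_nat ng / of_nat n else 0)"
    using i j by (simp add: conj_sym_eq sum.delta)
  finally show ?thesis using True by simp
next
  case False
  have r: "is_rep G m \<rho>" using irr1 irr_rep by auto
  have "(\<Sum>h\<in>carrier G. character G \<rho> (inv h) * \<sigma> h $$ (i,j)) =
        (\<Sum>h\<in>carrier G. \<Sum>k<m. \<sigma> h $$ (i,j) * \<rho> (inv h) $$ (k,k))"
    by (intro sum.cong refl) (simp add: char_entry[OF r] sum_distrib_left mult.commute)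
  also have "\<dots> = (\<Sum>k<m. \<Sum>h\<in>carrier G. \<sigma> h $$ (i,j) * \<rho> (inv h) $$ (k,k))"
    by (rule sum.swap)
  also have "\<dots> = 0"
    using schur_orth2[OF irr1 irr2 False i _ j] by (intro sum.neutral) auto
  finally show ?thesis using False by simp
qed

lemma conj_sum:
  assumes irr: "irreducible_rep G m \<rho>" and y: "y \<in> carrier G" and a: "a < m" and b: "b < m"
  shows "(\<Sum>x\<in>carrier G. \<rho> (x \<otimes> y \<otimes> inv x) $$ (a,b)) =
     (if a = b then of_nat ng / of_nat m * character G \<rho> y else 0)"
proof -
  have r: "is_rep G m \<rho>" using irr irr_rep by auto
  have e: "\<And>x. x \<in> carrier G \<Longrightarrow> \<rho> (x \<otimes> y \<otimes> inv x) $$ (a,b) =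
       (\<Sum>c<m. \<Sum>d<m. \<rho> y $$ (c,d) * (\<rho> x $$ (a,c) * \<rho> (inv x) $$ (d,b)))"
  proof -
    fix x assume x: "x \<in> carrier G"
    have "\<rho> (x \<otimes> y \<otimes> inv x) $$ (a,b) = (\<Sum>d<m. \<rho> (x \<otimes> y) $$ (a,d) * \<rho> (inv x) $$ (d,b))"
      using rep_entry[OF r _ inv_closed[OF x] a b] x y by simp
    also have "\<dots> = (\<Sum>d<m. \<Sum>c<m. \<rho> x $$ (a,c) * \<rho> y $$ (c,d) * \<rho> (inv x) $$ (d,b))"
      using rep_entry[OF r x y a] by (simp add: sum_distrib_right)
    also have "\<dots> = (\<Sum>c<m. \<Sum>d<m. \<rho> y $$ (c,d) * (\<rho> x $$ (a,c) * \<rho> (inv x) $$ (d,b)))"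
      by (subst sum.swap) (simp add: mult_ac)
    finally show "\<rho> (x \<otimes> y \<otimes> inv x) $$ (a,b) =
       (\<Sum>c<m. \<Sum>d<m. \<rho> y $$ (c,d) * (\<rho> x $$ (a,c) * \<rho> (inv x) $$ (d,b)))" .
  qed
  have "(\<Sum>x\<in>carrier G. \<rho> (x \<otimes> y \<otimes> inv x) $$ (a,b)) =
     (\<Sum>x\<in>carrier G. \<Sum>c<m. \<Sum>d<m. \<rho> y $$ (c,d) * (\<rho> x $$ (a,c) * \<rho> (inv x) $$ (d,b)))"
    by (rule sum.cong[OF refl e])
  also have "\<dots> = (\<Sum>c<m. \<Sum>x\<in>carrier G. \<Sum>d<m. \<rho> y $$ (c,d) * (\<rho> x $$ (a,c) * \<rho> (inv x) $$ (d,b)))"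
    by (rule sum.swap)
  also have "\<dots> = (\<Sum>c<m. \<Sum>d<m. \<Sum>x\<in>carrier G. \<rho> y $$ (c,d) * (\<rho> x $$ (a,c) * \<rho> (inv x) $$ (d,b)))"
    by (intro sum.cong refl) (rule sum.swap)
  also have "\<dots> = (\<Sum>c<m. \<Sum>d<m. \<rho> y $$ (c,d) * (\<Sum>x\<in>carrier G. \<rho> x $$ (a,c) * \<rho> (inv x) $$ (d,b)))"
    by (simp only: sum_distrib_left)
  also have "\<dots> = (\<Sum>c<m. \<Sum>d<m. \<rho> y $$ (c,d) * (if a = b \<and> d = c then of_nat ng / of_nat m else 0))"
    using schur_orth1[OF irr a b] by (intro sum.cong refl) simp
  also have "\<dots> = (\<Sum>c<m. if a = b then \<rho> y $$ (c,c) * (of_nat ng / of_nat m) else 0)"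
    by (intro sum.cong refl) (auto simp: sum.delta)
  also have "\<dots> = (if a = b then of_nat ng / of_nat m * character G \<rho> y else 0)"
    using char_entry[OF r y] by (simp add: sum_distrib_left sum_divide_distrib mult.commute)
  finally show ?thesis .
qed

lemma comm_sum:
  assumes irr: "irreducible_rep G m \<rho>" and a: "a < m" and b: "b < m"
  shows "(\<Sum>x\<in>carrier G. \<Sum>y\<in>carrier G. \<rho> (x \<otimes> y \<otimes> inv x \<otimes> inv y) $$ (a,b)) =
     (if a = b then (of_nat ng / of_nat m)^2 else 0)"
proof -
  have r: "is_rep G m \<rho>" using irr irr_rep by auto
  have "(\<Sum>x\<in>carrier G. \<Sum>y\<in>carrier G. \<rho> (x \<otimes> y \<otimes> inv x \<otimes> inv y) $$ (a,b)) =
        (\<Sum>y\<in>carrier G. \<Sum>x\<in>carrier G. \<Sum>c<m. \<rho> (x \<otimes> y \<otimes> inv x) $$ (a,c) * \<rho> (inv y) $$ (c,b))"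
    by (subst sum.swap) (intro sum.cong refl, rule rep_entry[OF r _ _ a b], simp_all)
  also have "\<dots> = (\<Sum>y\<in>carrier G. \<Sum>c<m. (\<Sum>x\<in>carrier G. \<rho> (x \<otimes> y \<otimes> inv x) $$ (a,c)) * \<rho> (inv y) $$ (c,b))"
    by (intro sum.cong refl) (simp only: sum_distrib_right, rule sum.swap)
  also have "\<dots> = (\<Sum>y\<in>carrier G. \<Sum>c<m. (if a = c then of_nat ng / of_nat m * character G \<rho> y else 0) * \<rho> (inv y) $$ (c,b))"
    using conj_sum[OF irr _ a] by (intro sum.cong refl) simp
  also have "\<dots> = (\<Sum>y\<in>carrier G. of_nat ng / of_nat m * (character G \<rho> y * \<rho> (inv y) $$ (a,b)))"
    using a by (intro sum.cong refl) (simp add: sum.delta)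
  also have "\<dots> = of_nat ng / of_nat m * (\<Sum>y\<in>carrier G. character G \<rho> (inv (inv y)) * \<rho> (inv y) $$ (a,b))"
    by (simp add: sum_distrib_left)
  also have "\<dots> = of_nat ng / of_nat m * (\<Sum>y\<in>carrier G. character G \<rho> (inv y) * \<rho> y $$ (a,b))"
    by (subst sum_inv[of "\<lambda>y. character G \<rho> (inv y) * \<rho> y $$ (a,b)"]) simp
  also have "\<dots> = (if a = b then (of_nat ng / of_nat m)^2 else 0)"
    using lemma_K[OF irr irr a b] by (simp add: power2_eq_square)
  finally show ?thesis .
qed

lemma sum_delta_G: "t \<in> carrier G \<Longrightarrow> (\<Sum>x\<in>carrier G. f x * (if x = t then 1 else 0)) = (f t :: complex)"
  by (simp add: sum.delta fin)

lemma e_comm: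
  assumes irr: "irreducible_rep G m \<rho>" and g: "g \<in> carrier G"
  shows "conv (central_idem G (character G \<rho>)) ccomm g =
     (of_nat ng / of_nat m)^2 * central_idem G (character G \<rho>) g"
proof -
  have r: "is_rep G m \<rho>" using irr irr_rep by auto
  let ?e = "central_idem G (character G \<rho>)"
  let ?c = "\<lambda>a b. a \<otimes> b \<otimes> inv a \<otimes> inv b"
  have cc: "\<And>a b. a \<in> carrier G \<Longrightarrow> b \<in> carrier G \<Longrightarrow> ?c a b \<in> carrier G" by simp
  have "conv ?e ccomm g = (\<Sum>x\<in>carrier G. \<Sum>a\<in>carrier G. \<Sum>b\<in>carrier G. ?e x * (if x = g \<otimes> inv (?c a b) then 1 else 0))"
    unfolding conv_def ccomm_def
  proof (intro sum.cong refl)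
    fix x assume x: "x \<in> carrier G"
    have "\<And>a b. a \<in> carrier G \<Longrightarrow> b \<in> carrier G \<Longrightarrow> (?c a b = inv x \<otimes> g) = (x = g \<otimes> inv (?c a b))"
    proof -
      fix a b assume a: "a \<in> carrier G" and b: "b \<in> carrier G"
      show "(?c a b = inv x \<otimes> g) = (x = g \<otimes> inv (?c a b))"
        using inv_solve_left[OF cc[OF a b] x g] inv_solve_right[OF x g cc[OF a b]] by simp
    qed
    then show "?e x * (\<Sum>a\<in>carrier G. \<Sum>b\<in>carrier G. if ?c a b = inv x \<otimes> g then 1 else 0) =
      (\<Sum>a\<in>carrier G. \<Sum>b\<in>carrier G. ?e x * (if x = g \<otimes> inv (?c a b) then 1 else 0))"
      by (simp add: sum_distrib_left cong: sum.cong del: if0_mult2)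
  qed
  also have "\<dots> = (\<Sum>a\<in>carrier G. \<Sum>b\<in>carrier G. ?e (g \<otimes> inv (?c a b)))"
    by (subst sum.swap, rule sum.cong[OF refl], subst sum.swap, rule sum.cong[OF refl])
       (rule sum_delta_G, use g in simp)
  also have "\<dots> = (\<Sum>a\<in>carrier G. \<Sum>b\<in>carrier G. of_nat m / of_nat ng *
       (\<Sum>i<m. \<Sum>j<m. \<rho> (?c a b) $$ (i,j) * \<rho> (inv g) $$ (j,i)))"
  proof (intro sum.cong refl)
    fix a b assume a: "a \<in> carrier G" and b: "b \<in> carrier G"
    have "inv (g \<otimes> inv (?c a b)) = ?c a b \<otimes> inv g"
      using a b g cc[OF a b] by (simp add: inv_mult_group)
    then show "?e (g \<otimes> inv (?c a b)) = of_nat m / of_nat ng *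
       (\<Sum>i<m. \<Sum>j<m. \<rho> (?c a b) $$ (i,j) * \<rho> (inv g) $$ (j,i))"
      using cidem_eq[OF r] char_entry[OF r] rep_entry[OF r cc[OF a b] inv_closed[OF g]] a b g by simp
  qed
  also have "\<dots> = of_nat m / of_nat ng * (\<Sum>a\<in>carrier G. \<Sum>b\<in>carrier G.
       (\<Sum>i<m. \<Sum>j<m. \<rho> (?c a b) $$ (i,j) * \<rho> (inv g) $$ (j,i)))"
    by (simp only: sum_distrib_left)
  also have "(\<Sum>a\<in>carrier G. \<Sum>b\<in>carrier G. (\<Sum>i<m. \<Sum>j<m. \<rho> (?c a b) $$ (i,j) * \<rho> (inv g) $$ (j,i)))
     = (of_nat ng / of_nat m)^2 * character G \<rho> (inv g)"
  proof -
    have "(\<Sum>a\<in>carrier G. \<Sum>b\<in>carrier G. (\<Sum>i<m. \<Sum>j<m. \<rho> (?c a b) $$ (i,j) * \<rho> (inv g) $$ (j,i)))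
     = (\<Sum>a\<in>carrier G. \<Sum>i<m. \<Sum>b\<in>carrier G. (\<Sum>j<m. \<rho> (?c a b) $$ (i,j) * \<rho> (inv g) $$ (j,i)))"
      by (intro sum.cong refl) (rule sum.swap)
    also have "\<dots> = (\<Sum>i<m. \<Sum>a\<in>carrier G. \<Sum>b\<in>carrier G. (\<Sum>j<m. \<rho> (?c a b) $$ (i,j) * \<rho> (inv g) $$ (j,i)))"
      by (rule sum.swap)
    also have "\<dots> = (\<Sum>i<m. \<Sum>a\<in>carrier G. \<Sum>j<m. \<Sum>b\<in>carrier G. \<rho> (?c a b) $$ (i,j) * \<rho> (inv g) $$ (j,i))"
      by (intro sum.cong refl) (rule sum.swap)
    also have "\<dots> = (\<Sum>i<m. \<Sum>j<m. \<Sum>a\<in>carrier G. \<Sum>b\<in>carrier G. \<rho> (?c a b) $$ (i,j) * \<rho> (inv g) $$ (j,i))"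
      by (intro sum.cong refl) (rule sum.swap)
    also have "\<dots> = (\<Sum>i<m. \<Sum>j<m.
        (\<Sum>a\<in>carrier G. \<Sum>b\<in>carrier G. \<rho> (?c a b) $$ (i,j)) * \<rho> (inv g) $$ (j,i))"
      by (simp only: sum_distrib_right)
    also have "\<dots> = (\<Sum>i<m. \<Sum>j<m.
        (if i = j then (of_nat ng / of_nat m)^2 * \<rho> (inv g) $$ (j,i) else 0))"
      using comm_sum[OF irr] by (intro sum.cong refl) simp
    also have "\<dots> = (\<Sum>i<m. (of_nat ng / of_nat m)^2 * \<rho> (inv g) $$ (i,i))"
      by (intro sum.cong refl) (simp add: sum.delta')
    also have "\<dots> = (of_nat ng / of_nat m)^2 * character G \<rho> (inv g)"
      using char_entry[OF r inv_closed[OF g]] by (simp add: sum_distrib_left)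
    finally show ?thesis .
  qed
  also have "of_nat m / of_nat ng * ((of_nat ng / of_nat m)^2 * character G \<rho> (inv g)) = (of_nat ng / of_nat m)^2 * ?e g"
    using cidem_eq[OF r] by simp
  finally show ?thesis .
qed

lemma e_orth:
  assumes irr1: "irreducible_rep G m \<rho>" and irr2: "irreducible_rep G n \<sigma>" and g: "g \<in> carrier G"
  shows "conv (central_idem G (character G \<rho>)) (central_idem G (character G \<sigma>)) g =
    (if character G \<rho> = character G \<sigma> then central_idem G (character G \<sigma>) g else 0)"
proof -
  have r: "is_rep G m \<rho>" and s: "is_rep G n \<sigma>" and npos: "n > 0" using irr1 irr2 irr_rep irr_pos by auto
  have "conv (central_idem G (character G \<rho>)) (central_idem G (character G \<sigma>)) g =
     (\<Sum>x\<in>carrier G. of_nat m / of_nat ng * (of_nat n / of_nat ng) *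
       (\<Sum>i<n. \<Sum>j<n. \<sigma> (inv g) $$ (i,j) * (character G \<rho> (inv x) * \<sigma> x $$ (j,i))))"
    unfolding conv_def
  proof (intro sum.cong refl)
    fix x assume x: "x \<in> carrier G"
    have "inv (inv x \<otimes> g) = inv g \<otimes> x" using x g by (simp add: inv_mult_group)
    then have "central_idem G (character G \<sigma>) (inv x \<otimes> g) = of_nat n / of_nat ng *
       (\<Sum>i<n. \<Sum>j<n. \<sigma> (inv g) $$ (i,j) * \<sigma> x $$ (j,i))"
      using cidem_eq[OF s] char_entry[OF s] rep_entry[OF s inv_closed[OF g] x] x g by simp
    moreover have "central_idem G (character G \<rho>) x = of_nat m / of_nat ng * character G \<rho> (inv x)"
      using cidem_eq[OF r] by simp
    ultimately show "central_idem G (character G \<rho>) x * central_idem G (character G \<sigma>) (inv x \<otimes> g) =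
     of_nat m / of_nat ng * (of_nat n / of_nat ng) *
       (\<Sum>i<n. \<Sum>j<n. \<sigma> (inv g) $$ (i,j) * (character G \<rho> (inv x) * \<sigma> x $$ (j,i)))"
      by (simp add: sum_distrib_left mult_ac)
  qed
  also have "\<dots> = of_nat m / of_nat ng * (of_nat n / of_nat ng) * (\<Sum>x\<in>carrier G. \<Sum>i<n. \<Sum>j<n.
       \<sigma> (inv g) $$ (i,j) * (character G \<rho> (inv x) * \<sigma> x $$ (j,i)))"
    by (simp only: sum_distrib_left)
  also have "(\<Sum>x\<in>carrier G. \<Sum>i<n. \<Sum>j<n.
       \<sigma> (inv g) $$ (i,j) * (character G \<rho> (inv x) * \<sigma> x $$ (j,i))) =
     (if character G \<rho> = character G \<sigma> then of_nat ng / of_nat n * character G \<sigma> (inv g) else 0)"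
  proof -
    have "(\<Sum>x\<in>carrier G. \<Sum>i<n. \<Sum>j<n.
       \<sigma> (inv g) $$ (i,j) * (character G \<rho> (inv x) * \<sigma> x $$ (j,i))) =
     (\<Sum>i<n. \<Sum>j<n. \<Sum>x\<in>carrier G.
       \<sigma> (inv g) $$ (i,j) * (character G \<rho> (inv x) * \<sigma> x $$ (j,i)))"
      by (subst sum.swap) (intro sum.cong refl, rule sum.swap)
    also have "\<dots> = (\<Sum>i<n. \<Sum>j<n. \<sigma> (inv g) $$ (i,j) *
       (\<Sum>x\<in>carrier G. character G \<rho> (inv x) * \<sigma> x $$ (j,i)))"
      by (simp only: sum_distrib_left)
    also have "\<dots> = (\<Sum>i<n. \<Sum>j<n. if character G \<rho> = character G \<sigma> \<and> j = i
         then \<sigma> (inv g) $$ (i,j) * (of_nat ng / of_nat n) else 0)"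
      using lemma_K[OF irr1 irr2] by (intro sum.cong refl) simp
    also have "\<dots> = (\<Sum>i<n. if character G \<rho> = character G \<sigma>
         then \<sigma> (inv g) $$ (i,i) * (of_nat ng / of_nat n) else 0)"
      by (intro sum.cong refl) (cases "character G \<rho> = character G \<sigma>", simp_all add: sum.delta)
    also have "\<dots> = (if character G \<rho> = character G \<sigma> then of_nat ng / of_nat n * character G \<sigma> (inv g) else 0)"
      using char_entry[OF s inv_closed[OF g]] by (simp add: sum_distrib_left sum_divide_distrib mult.commute)
    finally show ?thesis .
  qed
  also have "of_nat m / of_nat ng * (of_nat n / of_nat ng) *
     (if character G \<rho> = character G \<sigma> then of_nat ng / of_nat n * character G \<sigma> (inv g) else 0)
     = (if character G \<rho> = character G \<sigma> then central_idem G (character G \<sigma>) g else 0)"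
  proof (cases "character G \<rho> = character G \<sigma>")
    case True
    then have mn: "m = n" using char_one[OF r] char_one[OF s] by (metis of_nat_eq_iff)
    show ?thesis using True mn npos ng_pos cidem_eq[OF s] by simp
  qed simp
  finally show ?thesis .
qed

end

lemma inj_le:
  fixes B :: "complex mat"
  assumes B: "B \<in> carrier_mat m k" and inj: "\<And>v. v \<in> carrier_vec k \<Longrightarrow> B *\<^sub>v v = 0\<^sub>v m \<Longrightarrow> v = 0\<^sub>v k"
  shows "k \<le> m"
proof (rule ccontr)
  assume "\<not> k \<le> m"
  then have mk: "m < k" by simp
  define c where "c = (\<lambda>i. if i < m then row B i else 0\<^sub>v k)"
  have cc: "c \<in> {0..<k} \<rightarrow> carrier_vec k" unfolding c_def using B by auto
  define B' where "B' = mat\<^sub>r k k (\<lambda>i. if i = m then 0\<^sub>v k else c i)"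
  have B': "B' \<in> carrier_mat k k" unfolding B'_def by auto
  have "det B' = 0" unfolding B'_def by (rule det_row_0[OF mk cc])
  then obtain v where v: "v \<in> carrier_vec k" "v \<noteq> 0\<^sub>v k" "B' *\<^sub>v v = 0\<^sub>v k"
    using det_0_iff_vec_prod_zero[OF B'] by blast
  have "B *\<^sub>v v = 0\<^sub>v m"
  proof (rule eq_vecI)
    fix i assume "i < dim_vec (0\<^sub>v m)"
    then have i: "i < m" by simp
    have ik: "i < k" using i mk by simp
    have "(B *\<^sub>v v) $ i = row B i \<bullet> v" using B i by simp
    also have "row B i = row B' i" unfolding B'_def c_def using i ik B by simp
    also have "row B' i \<bullet> v = (B' *\<^sub>v v) $ i" using B' ik by simp
    also have "\<dots> = 0" using v ik by simp
    finally show "(B *\<^sub>v v) $ i = 0\<^sub>v m $ i" using i by simp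
  qed (use B in simp)
  with inj v show False by blast
qed

lemma mult_in_sub:
  fixes B :: "complex mat"
  assumes B: "B \<in> carrier_mat m k" and z: "0\<^sub>v m \<in> W"
    and add: "\<And>x y. x \<in> W \<Longrightarrow> y \<in> W \<Longrightarrow> x + y \<in> W"
    and sm: "\<And>c x. x \<in> W \<Longrightarrow> (c::complex) \<cdot>\<^sub>v x \<in> W"
    and cols: "\<And>j. j < k \<Longrightarrow> col B j \<in> W" and v: "v \<in> carrier_vec k"
  shows "B *\<^sub>v v \<in> W"
proof -
  define p where "p = (\<lambda>j. vec m (\<lambda>i. \<Sum>l<j. B $$ (i,l) * v $ l))"
  have "j \<le> k \<Longrightarrow> p j \<in> W" for j
  proof (induction j)
    case 0
    have "p 0 = 0\<^sub>v m" unfolding p_def by auto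
    then show ?case using z by simp
  next
    case (Suc j)
    have jk: "j < k" using Suc by simp
    have "p (Suc j) = p j + v $ j \<cdot>\<^sub>v col B j"
      unfolding p_def using B jk by (intro eq_vecI) (auto simp: mult.commute)
    then show ?case using Suc add sm cols jk by simp
  qed
  moreover have "p k = B *\<^sub>v v"
    unfolding p_def using B v by (intro eq_vecI) (auto simp: scalar_prod_def atLeast0LessThan mult.commute)
  ultimately show ?thesis by (metis order_refl)
qed

lemma ext_inj:
  fixes B :: "complex mat"
  assumes B: "B \<in> carrier_mat m k" and inj: "\<And>v. v \<in> carrier_vec k \<Longrightarrow> B *\<^sub>v v = 0\<^sub>v m \<Longrightarrow> v = 0\<^sub>v k"
    and w: "w \<in> carrier_vec m" and nw: "\<And>v. v \<in> carrier_vec k \<Longrightarrow> B *\<^sub>v v \<noteq> w"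
  defines "B2 \<equiv> mat m (Suc k) (\<lambda>(i,j). if j < k then B $$ (i,j) else w $ i)"
  shows "B2 \<in> carrier_mat m (Suc k)"
    and "\<And>v. v \<in> carrier_vec (Suc k) \<Longrightarrow> B2 *\<^sub>v v = 0\<^sub>v m \<Longrightarrow> v = 0\<^sub>v (Suc k)"
    and "\<And>j. j < Suc k \<Longrightarrow> col B2 j = (if j < k then col B j else w)"
proof -
  show B2: "B2 \<in> carrier_mat m (Suc k)" unfolding B2_def by simp
  show "\<And>j. j < Suc k \<Longrightarrow> col B2 j = (if j < k then col B j else w)"
    unfolding B2_def using B w by (auto intro!: eq_vecI)
  fix v :: "complex vec" assume v: "v \<in> carrier_vec (Suc k)" and z: "B2 *\<^sub>v v = 0\<^sub>v m"
  define v' where "v' = vec k (\<lambda>j. v $ j)"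
  define a where "a = v $ k"
  have v': "v' \<in> carrier_vec k" unfolding v'_def by simp
  have e: "\<And>i. i < m \<Longrightarrow> (B2 *\<^sub>v v) $ i = (B *\<^sub>v v') $ i + a * w $ i"
  proof -
    fix i assume i: "i < m"
    have "(B2 *\<^sub>v v) $ i = (\<Sum>l<Suc k. B2 $$ (i,l) * v $ l)"
      using B2 v i by (simp add: scalar_prod_def atLeast0LessThan)
    also have "\<dots> = (\<Sum>l<k. B $$ (i,l) * v' $ l) + a * w $ i"
      unfolding B2_def a_def v'_def using i by (simp add: mult.commute)
    also have "(\<Sum>l<k. B $$ (i,l) * v' $ l) = (B *\<^sub>v v') $ i"
      using B v' i by (simp add: scalar_prod_def atLeast0LessThan)
    finally show "(B2 *\<^sub>v v) $ i = (B *\<^sub>v v') $ i + a * w $ i" .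
  qed
  have a0: "a = 0"
  proof (rule ccontr)
    assume a: "a \<noteq> 0"
    have "B *\<^sub>v ((- 1 / a) \<cdot>\<^sub>v v') = w"
    proof (rule eq_vecI)
      fix i assume "i < dim_vec w"
      then have i: "i < m" using w by simp
      have "(B *\<^sub>v v') $ i + a * w $ i = 0" using e[OF i] z i by simp
      then have "(B *\<^sub>v v') $ i = - a * w $ i" by (simp add: eq_neg_iff_add_eq_0)
      then show "(B *\<^sub>v ((- 1 / a) \<cdot>\<^sub>v v')) $ i = w $ i"
        using B v' i a by (simp add: mult_mat_vec)
    qed (use B w in simp)
    with nw v' show False by simp
  qed
  have "B *\<^sub>v v' = 0\<^sub>v m"
  proof (rule eq_vecI)
    fix i assume "i < dim_vec (0\<^sub>v m)"
    then have i: "i < m" by simp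
    show "(B *\<^sub>v v') $ i = 0\<^sub>v m $ i" using e[OF i] z i a0 by simp
  qed (use B in simp)
  then have "v' = 0\<^sub>v k" using inj v' by simp
  then show "v = 0\<^sub>v (Suc k)"
  proof -
    assume v0: "v' = 0\<^sub>v k"
    show ?thesis
    proof (rule eq_vecI)
      fix j assume "j < dim_vec (0\<^sub>v (Suc k))"
      then have j: "j < Suc k" by simp
      show "v $ j = 0\<^sub>v (Suc k) $ j"
      proof (cases "j < k")
        case True
        then have "v' $ j = 0" using v0 by simp
        then show ?thesis using True j unfolding v'_def by simp
      next
        case False
        then have "j = k" using j by simp
        then show ?thesis using a0 unfolding a_def by simp
      qed
    qed (use v in simp)
  qed
qed

lemma basis_exists:
  fixes W :: "complex vec set"
  assumes sub: "W \<subseteq> carrier_vec m" and z: "0\<^sub>v m \<in> W"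
    and add: "\<And>x y. x \<in> W \<Longrightarrow> y \<in> W \<Longrightarrow> x + y \<in> W"
    and sm: "\<And>c x. x \<in> W \<Longrightarrow> (c::complex) \<cdot>\<^sub>v x \<in> W"
  shows "\<exists>k B. B \<in> carrier_mat m k \<and> (\<forall>v\<in>carrier_vec k. B *\<^sub>v v = 0\<^sub>v m \<longrightarrow> v = 0\<^sub>v k) \<and>
     (\<forall>j<k. col B j \<in> W) \<and> (\<forall>w\<in>W. \<exists>v\<in>carrier_vec k. B *\<^sub>v v = w) \<and>
     (W \<noteq> carrier_vec m \<longrightarrow> k < m) \<and> (W \<noteq> {0\<^sub>v m} \<longrightarrow> 0 < k)"
proof -
  define P where "P = (\<lambda>k. \<exists>B. B \<in> carrier_mat m k \<and> (\<forall>v\<in>carrier_vec k. B *\<^sub>v v = 0\<^sub>v m \<longrightarrow> v = 0\<^sub>v k) \<and>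
     (\<forall>j<k. col B j \<in> W))"
  have P0: "P 0" unfolding P_def
    by (rule exI[of _ "0\<^sub>m m 0"]) auto
  have bound: "\<And>k. P k \<Longrightarrow> k \<le> m" unfolding P_def using inj_le by blast
  define K where "K = (GREATEST k. P k)"
  have PK: "P K" unfolding K_def by (rule GreatestI_nat[of P 0 m, OF P0 bound])
  have maxK: "\<And>k. P k \<Longrightarrow> k \<le> K" unfolding K_def by (rule Greatest_le_nat[of P _ m, OF _ bound])
  obtain B where B: "B \<in> carrier_mat m K" and inj: "\<forall>v\<in>carrier_vec K. B *\<^sub>v v = 0\<^sub>v m \<longrightarrow> v = 0\<^sub>v K"
    and cols: "\<forall>j<K. col B j \<in> W" using PK unfolding P_def by blast
  have inj': "\<And>v. v \<in> carrier_vec K \<Longrightarrow> B *\<^sub>v v = 0\<^sub>v m \<Longrightarrow> v = 0\<^sub>v K" using inj by blast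
  have img: "\<And>v. v \<in> carrier_vec K \<Longrightarrow> B *\<^sub>v v \<in> W"
    using mult_in_sub[OF B z add sm] cols by blast
  have extend: "\<And>w. w \<in> carrier_vec m \<Longrightarrow> (\<And>v. v \<in> carrier_vec K \<Longrightarrow> B *\<^sub>v v \<noteq> w) \<Longrightarrow> w \<in> W \<Longrightarrow> False"
  proof -
    fix w assume w: "w \<in> carrier_vec m" and nw: "\<And>v. v \<in> carrier_vec K \<Longrightarrow> B *\<^sub>v v \<noteq> w" and wW: "w \<in> W"
    note E = ext_inj[OF B inj' w nw]
    let ?B2 = "mat m (Suc K) (\<lambda>(i,j). if j < K then B $$ (i,j) else w $ i)"
    have c1: "?B2 \<in> carrier_mat m (Suc K)" by (rule E(1))
    have c2: "\<forall>v\<in>carrier_vec (Suc K). ?B2 *\<^sub>v v = 0\<^sub>v m \<longrightarrow> v = 0\<^sub>v (Suc K)" using E(2) by blast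
    have c3: "\<forall>j<Suc K. col ?B2 j \<in> W" using E(3) cols wW by auto
    have "P (Suc K)" unfolding P_def using c1 c2 c3 by blast
    with maxK show False by fastforce
  qed
  have span: "\<forall>w\<in>W. \<exists>v\<in>carrier_vec K. B *\<^sub>v v = w"
    using extend sub by blast
  have less: "W \<noteq> carrier_vec m \<longrightarrow> K < m"
  proof
    assume "W \<noteq> carrier_vec m"
    then obtain w where w: "w \<in> carrier_vec m" "w \<notin> W" using sub by blast
    have nw: "\<And>v. v \<in> carrier_vec K \<Longrightarrow> B *\<^sub>v v \<noteq> w" using img w by blast
    note E = ext_inj[OF B inj' w(1) nw]
    have "Suc K \<le> m" using inj_le[OF E(1)] E(2) by blast
    then show "K < m" by simp
  qed
  have pos: "W \<noteq> {0\<^sub>v m} \<longrightarrow> 0 < K"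
  proof
    assume W0: "W \<noteq> {0\<^sub>v m}"
    show "0 < K"
    proof (rule ccontr)
      assume "\<not> 0 < K"
      then have K0: "K = 0" by simp
      have "W \<subseteq> {0\<^sub>v m}"
      proof
        fix w assume "w \<in> W"
        then obtain v where v: "v \<in> carrier_vec K" "B *\<^sub>v v = w" using span by blast
        then have "v = 0\<^sub>v 0" using K0 by auto
        then show "w \<in> {0\<^sub>v m}" using v B K0 by auto
      qed
      with z W0 show False by blast
    qed
  qed
  show ?thesis using B inj cols span less pos by blast
qed


lemma inj_cancel:
  fixes B :: "complex mat"
  assumes B: "B \<in> carrier_mat m k" and inj: "\<forall>v\<in>carrier_vec k. B *\<^sub>v v = 0\<^sub>v m \<longrightarrow> v = 0\<^sub>v k"
    and X: "X \<in> carrier_mat k n" and Y: "Y \<in> carrier_mat k n" and e: "B * X = B * Y"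
  shows "X = Y"
proof (rule mat_eq_by_vecs[OF X Y])
  fix v :: "complex vec" assume v: "v \<in> carrier_vec n"
  have Xv: "X *\<^sub>v v \<in> carrier_vec k" and Yv: "Y *\<^sub>v v \<in> carrier_vec k" using X Y v by auto
  have "B *\<^sub>v (X *\<^sub>v v) = B *\<^sub>v (Y *\<^sub>v v)"
    using e by (simp only: assoc_mult_mat_vec[OF B X v, symmetric] assoc_mult_mat_vec[OF B Y v, symmetric])
  then have "B *\<^sub>v (X *\<^sub>v v - Y *\<^sub>v v) = 0\<^sub>v m"
    using B Xv Yv by (simp add: mult_minus_distrib_mat_vec)
  then have z: "X *\<^sub>v v - Y *\<^sub>v v = 0\<^sub>v k" using inj Xv Yv by simp
  show "X *\<^sub>v v = Y *\<^sub>v v"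
  proof (rule eq_vecI)
    fix i assume "i < dim_vec (Y *\<^sub>v v)"
    then have i: "i < k" using Y by simp
    have "(X *\<^sub>v v - Y *\<^sub>v v) $ i = 0" using z i by simp
    then show "(X *\<^sub>v v) $ i = (Y *\<^sub>v v) $ i" using i X Y by simp
  qed (use X Y in simp)
qed

context fgrp
begin

lemma subrep:
  assumes r: "is_rep G m \<rho>" and W: "inv_sub G m \<rho> W"
    and B: "B \<in> carrier_mat m k" and inj: "\<forall>v\<in>carrier_vec k. B *\<^sub>v v = 0\<^sub>v m \<longrightarrow> v = 0\<^sub>v k"
    and cols: "\<forall>j<k. col B j \<in> W" and span: "\<forall>w\<in>W. \<exists>v\<in>carrier_vec k. B *\<^sub>v v = w"
  shows "\<exists>R. is_rep G k R \<and> (\<forall>g\<in>carrier G. B * R g = \<rho> g * B)"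
proof -
  have ex: "\<And>g j. g \<in> carrier G \<Longrightarrow> j < k \<Longrightarrow> \<exists>c. c \<in> carrier_vec k \<and> B *\<^sub>v c = \<rho> g *\<^sub>v col B j"
  proof -
    fix g j assume g: "g \<in> carrier G" and j: "j < k"
    have "\<rho> g *\<^sub>v col B j \<in> W" using W cols g j unfolding inv_sub_def by blast
    then show "\<exists>c. c \<in> carrier_vec k \<and> B *\<^sub>v c = \<rho> g *\<^sub>v col B j" using span by blast
  qed
  define cv where "cv = (\<lambda>g j. SOME c. c \<in> carrier_vec k \<and> B *\<^sub>v c = \<rho> g *\<^sub>v col B j)"
  have cv: "\<And>g j. g \<in> carrier G \<Longrightarrow> j < k \<Longrightarrow> cv g j \<in> carrier_vec k \<and> B *\<^sub>v cv g j = \<rho> g *\<^sub>v col B j"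
    unfolding cv_def by (rule someI_ex, rule ex)
  define R where "R = (\<lambda>g. mat k k (\<lambda>(i,j). cv g j $ i))"
  have Rc: "\<And>g. R g \<in> carrier_mat k k" unfolding R_def by simp
  have colR: "\<And>g j. g \<in> carrier G \<Longrightarrow> j < k \<Longrightarrow> col (R g) j = cv g j"
  proof -
    fix g j assume g: "g \<in> carrier G" and j: "j < k"
    have d: "dim_vec (cv g j) = k" using cv[OF g j] by (simp add: carrier_vecD)
    show "col (R g) j = cv g j"
    proof (rule eq_vecI)
      fix i assume "i < dim_vec (cv g j)"
      then have i: "i < k" using d by simp
      show "col (R g) j $ i = cv g j $ i" using i j by (simp add: R_def)
    qed (use d in \<open>simp add: R_def\<close>)
  qed
  have BR: "\<And>g. g \<in> carrier G \<Longrightarrow> B * R g = \<rho> g * B"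
  proof -
    fix g assume g: "g \<in> carrier G"
    have rg: "\<rho> g \<in> carrier_mat m m" using rep_carrier[OF r g] .
    show "B * R g = \<rho> g * B"
    proof (rule eq_matI)
      fix i j assume i: "i < dim_row (\<rho> g * B)" and j: "j < dim_col (\<rho> g * B)"
      have i': "i < m" and j': "j < k" using i j rg B by auto
      have "(B * R g) $$ (i,j) = row B i \<bullet> col (R g) j" using B Rc[of g] i' j' by (simp add: index_mult_mat carrier_matD)
      also have "\<dots> = (B *\<^sub>v cv g j) $ i" using colR[OF g j'] B i' by simp
      also have "\<dots> = (\<rho> g *\<^sub>v col B j) $ i" using cv[OF g j'] by simp
      also have "\<dots> = (\<rho> g * B) $$ (i,j)" using rg B i' j' by (simp add: index_mult_mat)
      finally show "(B * R g) $$ (i,j) = (\<rho> g * B) $$ (i,j)" .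
    qed (use B Rc rg in auto)
  qed
  have "is_rep G k R"
    unfolding is_rep_def
  proof (intro conjI ballI)
    fix g assume "g \<in> carrier G" then show "R g \<in> carrier_mat k k" using Rc by simp
  next
    fix g h assume g: "g \<in> carrier G" and h: "h \<in> carrier G"
    have rg: "\<rho> g \<in> carrier_mat m m" "\<rho> h \<in> carrier_mat m m" using rep_carrier[OF r] g h by auto
    have "B * R (g \<otimes> h) = \<rho> g * \<rho> h * B" using BR[of "g \<otimes> h"] g h rep_mult[OF r g h] by simp
    also have "\<dots> = \<rho> g * (\<rho> h * B)" by (rule assoc_mult_mat[OF rg(1) rg(2) B])
    also have "\<dots> = \<rho> g * (B * R h)" using BR[OF h] by simp
    also have "\<dots> = (\<rho> g * B) * R h" by (rule assoc_mult_mat[OF rg(1) B Rc, symmetric])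
    also have "\<dots> = (B * R g) * R h" using BR[OF g] by simp
    also have "\<dots> = B * (R g * R h)" by (rule assoc_mult_mat[OF B Rc Rc])
    finally show "R (g \<otimes> h) = R g * R h"
      by (rule inj_cancel[OF B inj Rc mult_carrier_mat[OF Rc Rc]])
  next
    have "B * R \<one> = \<rho> \<one> * B" using BR by simp
    also have "\<dots> = B" using rep_one[OF r] B by simp
    also have "\<dots> = B * 1\<^sub>m k" using B by simp
    finally show "R \<one> = 1\<^sub>m k"
      by (rule inj_cancel[OF B inj Rc one_carrier_mat])
  qed
  then show ?thesis using BR by blast
qed

definition ext :: "('a \<Rightarrow> complex mat) \<Rightarrow> nat \<Rightarrow> ('a \<Rightarrow> complex) \<Rightarrow> complex mat" where
  "ext \<rho> n f = mat n n (\<lambda>(i,j). \<Sum>g\<in>carrier G. f g * \<rho> g $$ (i,j))"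

lemma ext_carrier[simp]: "ext \<rho> n f \<in> carrier_mat n n"
  unfolding ext_def by simp

lemma ext_dims[simp]: "dim_row (ext \<rho> n f) = n" "dim_col (ext \<rho> n f) = n"
  unfolding ext_def by simp_all

lemma ext_cong: "(\<And>g. g \<in> carrier G \<Longrightarrow> f g = h g) \<Longrightarrow> ext \<rho> n f = ext \<rho> n h"
  unfolding ext_def by (intro eq_matI) auto

lemma ext_intertwine:
  assumes B: "B \<in> carrier_mat m k" and r: "is_rep G m \<rho>" and s: "is_rep G k R"
    and BR: "\<And>g. g \<in> carrier G \<Longrightarrow> B * R g = \<rho> g * B"
  shows "B * ext R k f = ext \<rho> m f * B"
proof (rule eq_matI)
  fix i j assume i: "i < dim_row (ext \<rho> m f * B)" and j: "j < dim_col (ext \<rho> m f * B)"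
  have i': "i < m" and j': "j < k" using i j B by auto
  have "(B * ext R k f) $$ (i,j) = (\<Sum>c<k. B $$ (i,c) * (\<Sum>g\<in>carrier G. f g * R g $$ (c,j)))"
    using mat_mult_entry[OF B ext_carrier i' j'] j' by (simp add: ext_def)
  also have "\<dots> = (\<Sum>c<k. \<Sum>g\<in>carrier G. f g * (B $$ (i,c) * R g $$ (c,j)))"
    by (simp add: sum_distrib_left mult_ac)
  also have "\<dots> = (\<Sum>g\<in>carrier G. \<Sum>c<k. f g * (B $$ (i,c) * R g $$ (c,j)))"
    by (rule sum.swap)
  also have "\<dots> = (\<Sum>g\<in>carrier G. f g * (B * R g) $$ (i,j))"
    using mat_mult_entry[OF B rep_carrier[OF s] i' j'] by (simp add: sum_distrib_left)
  also have "\<dots> = (\<Sum>g\<in>carrier G. f g * (\<rho> g * B) $$ (i,j))"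
    using BR by simp
  also have "\<dots> = (\<Sum>g\<in>carrier G. \<Sum>c<m. f g * (\<rho> g $$ (i,c) * B $$ (c,j)))"
    using mat_mult_entry[OF rep_carrier[OF r] B i' j'] by (simp add: sum_distrib_left)
  also have "\<dots> = (\<Sum>c<m. \<Sum>g\<in>carrier G. f g * (\<rho> g $$ (i,c) * B $$ (c,j)))"
    by (rule sum.swap)
  also have "\<dots> = (\<Sum>c<m. (\<Sum>g\<in>carrier G. f g * \<rho> g $$ (i,c)) * B $$ (c,j))"
    by (simp add: sum_distrib_right sum_distrib_left mult_ac)
  also have "\<dots> = (ext \<rho> m f * B) $$ (i,j)"
    using mat_mult_entry[OF ext_carrier B i' j'] i' by (simp add: ext_def)
  finally show "(B * ext R k f) $$ (i,j) = (ext \<rho> m f * B) $$ (i,j)" .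
qed (use B in auto)

lemma ext_conv:
  assumes r: "is_rep G n \<rho>"
  shows "ext \<rho> n (conv f h) = ext \<rho> n f * ext \<rho> n h"
proof (rule eq_matI)
  fix i j assume i: "i < dim_row (ext \<rho> n f * ext \<rho> n h)" and j: "j < dim_col (ext \<rho> n f * ext \<rho> n h)"
  have i': "i < n" and j': "j < n" using i j by auto
  have "ext \<rho> n (conv f h) $$ (i,j) = (\<Sum>g\<in>carrier G. (\<Sum>x\<in>carrier G. f x * h (inv x \<otimes> g)) * \<rho> g $$ (i,j))"
    using i' j' by (simp add: ext_def conv_def)
  also have "\<dots> = (\<Sum>x\<in>carrier G. \<Sum>g\<in>carrier G. f x * (h (inv x \<otimes> g) * \<rho> g $$ (i,j)))"
    by (subst sum.swap) (simp add: sum_distrib_right sum_distrib_left mult_ac)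
  also have "\<dots> = (\<Sum>x\<in>carrier G. \<Sum>y\<in>carrier G. f x * (h y * \<rho> (x \<otimes> y) $$ (i,j)))"
  proof (rule sum.cong[OF refl])
    fix x assume x: "x \<in> carrier G"
    have "(\<Sum>g\<in>carrier G. f x * (h (inv x \<otimes> g) * \<rho> g $$ (i,j))) =
          (\<Sum>y\<in>carrier G. f x * (h (inv x \<otimes> (x \<otimes> y)) * \<rho> (x \<otimes> y) $$ (i,j)))"
      by (rule sum_lmult[OF x, symmetric])
    also have "\<dots> = (\<Sum>y\<in>carrier G. f x * (h y * \<rho> (x \<otimes> y) $$ (i,j)))"
      using x by (intro sum.cong refl) (simp add: m_assoc[symmetric])
    finally show "(\<Sum>g\<in>carrier G. f x * (h (inv x \<otimes> g) * \<rho> g $$ (i,j))) =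
          (\<Sum>y\<in>carrier G. f x * (h y * \<rho> (x \<otimes> y) $$ (i,j)))" .
  qed
  also have "\<dots> = (\<Sum>x\<in>carrier G. \<Sum>y\<in>carrier G. \<Sum>c<n. f x * (h y * (\<rho> x $$ (i,c) * \<rho> y $$ (c,j))))"
    using rep_entry[OF r _ _ i' j'] by (simp add: sum_distrib_left)
  also have "\<dots> = (\<Sum>x\<in>carrier G. \<Sum>c<n. \<Sum>y\<in>carrier G. f x * (h y * (\<rho> x $$ (i,c) * \<rho> y $$ (c,j))))"
    by (intro sum.cong refl) (rule sum.swap)
  also have "\<dots> = (\<Sum>c<n. \<Sum>x\<in>carrier G. \<Sum>y\<in>carrier G. f x * (h y * (\<rho> x $$ (i,c) * \<rho> y $$ (c,j))))"
    by (rule sum.swap)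
  also have "\<dots> = (\<Sum>c<n. (\<Sum>x\<in>carrier G. f x * \<rho> x $$ (i,c)) * (\<Sum>y\<in>carrier G. h y * \<rho> y $$ (c,j)))"
    by (simp add: sum_product mult_ac)
  also have "\<dots> = (ext \<rho> n f * ext \<rho> n h) $$ (i,j)"
    using mat_mult_entry[OF ext_carrier ext_carrier i' j'] i' j' by (simp add: ext_def)
  finally show "ext \<rho> n (conv f h) $$ (i,j) = (ext \<rho> n f * ext \<rho> n h) $$ (i,j)" .
qed auto

lemma sum_conj: "x \<in> carrier G \<Longrightarrow> (\<Sum>h\<in>carrier G. F (x \<otimes> h \<otimes> inv x)) = (\<Sum>h\<in>carrier G. F h)"
  by (rule sum.reindex_bij_witness[of _ "\<lambda>h. inv x \<otimes> h \<otimes> x" "\<lambda>h. x \<otimes> h \<otimes> inv x"])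
     (auto simp: m_assoc[symmetric], simp_all add: m_assoc)

lemma ext_entry_mult_right:
  assumes r: "is_rep G n \<rho>" and x: "x \<in> carrier G" and i: "i < n" and j: "j < n"
  shows "(ext \<rho> n f * \<rho> x) $$ (i,j) = (\<Sum>g\<in>carrier G. f g * \<rho> (g \<otimes> x) $$ (i,j))"
proof -
  have rx: "\<rho> x \<in> carrier_mat n n" using rep_carrier[OF r x] .
  have "(ext \<rho> n f * \<rho> x) $$ (i,j) = (\<Sum>c<n. (\<Sum>g\<in>carrier G. f g * \<rho> g $$ (i,c)) * \<rho> x $$ (c,j))"
    using mat_mult_entry[OF ext_carrier rx i j] i by (simp add: ext_def)
  also have "\<dots> = (\<Sum>c<n. \<Sum>g\<in>carrier G. f g * (\<rho> g $$ (i,c) * \<rho> x $$ (c,j)))"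
    by (simp add: sum_distrib_left sum_distrib_right mult_ac)
  also have "\<dots> = (\<Sum>g\<in>carrier G. \<Sum>c<n. f g * (\<rho> g $$ (i,c) * \<rho> x $$ (c,j)))"
    by (rule sum.swap)
  also have "\<dots> = (\<Sum>g\<in>carrier G. f g * \<rho> (g \<otimes> x) $$ (i,j))"
    using rep_entry[OF r _ x i j] by (simp add: sum_distrib_left)
  finally show ?thesis .
qed

lemma ext_entry_mult_left:
  assumes r: "is_rep G n \<rho>" and x: "x \<in> carrier G" and i: "i < n" and j: "j < n"
  shows "(\<rho> x * ext \<rho> n f) $$ (i,j) = (\<Sum>g\<in>carrier G. f g * \<rho> (x \<otimes> g) $$ (i,j))"
proof -
  have rx: "\<rho> x \<in> carrier_mat n n" using rep_carrier[OF r x] .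
  have "(\<rho> x * ext \<rho> n f) $$ (i,j) = (\<Sum>c<n. \<rho> x $$ (i,c) * (\<Sum>g\<in>carrier G. f g * \<rho> g $$ (c,j)))"
    using mat_mult_entry[OF rx ext_carrier i j] j by (simp add: ext_def)
  also have "\<dots> = (\<Sum>c<n. \<Sum>g\<in>carrier G. f g * (\<rho> x $$ (i,c) * \<rho> g $$ (c,j)))"
    by (simp add: sum_distrib_left mult_ac)
  also have "\<dots> = (\<Sum>g\<in>carrier G. \<Sum>c<n. f g * (\<rho> x $$ (i,c) * \<rho> g $$ (c,j)))"
    by (rule sum.swap)
  also have "\<dots> = (\<Sum>g\<in>carrier G. f g * \<rho> (x \<otimes> g) $$ (i,j))"
    using rep_entry[OF r x _ i j] by (simp add: sum_distrib_left)
  finally show ?thesis .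
qed

lemma ext_comm:
  assumes r: "is_rep G n \<rho>" and x: "x \<in> carrier G"
    and cf: "\<And>y g. y \<in> carrier G \<Longrightarrow> g \<in> carrier G \<Longrightarrow> f (y \<otimes> g \<otimes> inv y) = f g"
  shows "ext \<rho> n f * \<rho> x = \<rho> x * ext \<rho> n f"
proof (rule eq_matI)
  fix i j assume i: "i < dim_row (\<rho> x * ext \<rho> n f)" and j: "j < dim_col (\<rho> x * ext \<rho> n f)"
  have rx: "\<rho> x \<in> carrier_mat n n" using rep_carrier[OF r x] .
  have i': "i < n" and j': "j < n" using i j rx by auto
  have "(ext \<rho> n f * \<rho> x) $$ (i,j) = (\<Sum>g\<in>carrier G. f g * \<rho> (g \<otimes> x) $$ (i,j))"
    by (rule ext_entry_mult_right[OF r x i' j'])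
  also have "\<dots> = (\<Sum>h\<in>carrier G. f (x \<otimes> h \<otimes> inv x) * \<rho> (x \<otimes> h \<otimes> inv x \<otimes> x) $$ (i,j))"
    by (rule sum_conj[OF x, symmetric])
  also have "\<dots> = (\<Sum>h\<in>carrier G. f h * \<rho> (x \<otimes> h) $$ (i,j))"
    using x cf by (intro sum.cong refl) (simp add: m_assoc)
  also have "\<dots> = (\<rho> x * ext \<rho> n f) $$ (i,j)"
    by (rule ext_entry_mult_left[OF r x i' j', symmetric])
  finally show "(ext \<rho> n f * \<rho> x) $$ (i,j) = (\<rho> x * ext \<rho> n f) $$ (i,j)" .
qed (use rep_carrier[OF r x] in auto)

end

context fgrp
begin

definition delta1 :: "'a \<Rightarrow> complex" where "delta1 g = (if g = \<one> then 1 else 0)"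

lemma irr_charsE: "\<chi> \<in> irr_chars G \<Longrightarrow> \<exists>n \<rho>. irreducible_rep G n \<rho> \<and> \<chi> = character G \<rho>"
  unfolding irr_chars_def by blast

lemma irr_charsI: "irreducible_rep G n \<rho> \<Longrightarrow> character G \<rho> \<in> irr_chars G"
  unfolding irr_chars_def by blast

lemma char_orth:
  assumes irr1: "irreducible_rep G m \<rho>" and irr2: "irreducible_rep G n \<sigma>"
  shows "(\<Sum>h\<in>carrier G. character G \<rho> (inv h) * character G \<sigma> h) =
     (if character G \<rho> = character G \<sigma> then of_nat ng else 0)"
proof -
  have s: "is_rep G n \<sigma>" and npos: "n > 0" using irr2 irr_rep irr_pos by auto
  have "(\<Sum>h\<in>carrier G. character G \<rho> (inv h) * character G \<sigma> h) =
        (\<Sum>h\<in>carrier G. \<Sum>i<n. character G \<rho> (inv h) * \<sigma> h $$ (i,i))"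
    using char_entry[OF s] by (simp add: sum_distrib_left)
  also have "\<dots> = (\<Sum>i<n. \<Sum>h\<in>carrier G. character G \<rho> (inv h) * \<sigma> h $$ (i,i))"
    by (rule sum.swap)
  also have "\<dots> = (\<Sum>i<n. if character G \<rho> = character G \<sigma> then of_nat ng / of_nat n else 0)"
    using lemma_K[OF irr1 irr2] by simp
  also have "\<dots> = (if character G \<rho> = character G \<sigma> then of_nat ng else 0)"
    using npos by simp
  finally show ?thesis .
qed

lemma enum_G: "\<exists>e. bij_betw e {..<ng} (carrier G)"
  using ex_bij_betw_nat_finite[OF fin] by (simp add: atLeast0LessThan)

lemma card_irr_le:
  assumes F: "F \<subseteq> irr_chars G" and finF: "finite F"
  shows "card F \<le> ng"
proof -
  obtain e where e: "bij_betw e {..<ng} (carrier G)" using enum_G by blast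
  obtain f where f: "bij_betw f {..<card F} F"
    using ex_bij_betw_nat_finite[OF finF] by (auto simp: atLeast0LessThan)
  define k where "k = card F"
  define B where "B = mat ng k (\<lambda>(i,l). f l (e i))"
  have B: "B \<in> carrier_mat ng k" unfolding B_def by simp
  have firr: "\<And>l. l < k \<Longrightarrow> \<exists>n \<rho>. irreducible_rep G n \<rho> \<and> f l = character G \<rho>"
    using f F irr_charsE unfolding k_def bij_betw_def by blast
  have inj: "\<And>v. v \<in> carrier_vec k \<Longrightarrow> B *\<^sub>v v = 0\<^sub>v ng \<Longrightarrow> v = 0\<^sub>v k"
  proof -
    fix v :: "complex vec" assume v: "v \<in> carrier_vec k" and z: "B *\<^sub>v v = 0\<^sub>v ng"
    have zg: "\<And>g. g \<in> carrier G \<Longrightarrow> (\<Sum>l<k. f l g * v $ l) = 0"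
    proof -
      fix g assume g: "g \<in> carrier G"
      have "g \<in> e ` {..<ng}" using e g unfolding bij_betw_def by simp
      then obtain i where i: "i < ng" "e i = g" by blast
      have "(B *\<^sub>v v) $ i = (\<Sum>l<k. f l (e i) * v $ l)"
        using B v i by (simp add: B_def scalar_prod_def atLeast0LessThan)
      then show "(\<Sum>l<k. f l g * v $ l) = 0" using z i by simp
    qed
    show "v = 0\<^sub>v k"
    proof (rule eq_vecI)
      fix l0 assume "l0 < dim_vec (0\<^sub>v k)"
      then have l0: "l0 < k" by simp
      obtain n0 \<rho>0 where r0: "irreducible_rep G n0 \<rho>0" "f l0 = character G \<rho>0" using firr[OF l0] by blast
      have "0 = (\<Sum>g\<in>carrier G. f l0 (inv g) * (\<Sum>l<k. f l g * v $ l))"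
        using zg by simp
      also have "\<dots> = (\<Sum>g\<in>carrier G. \<Sum>l<k. v $ l * (f l0 (inv g) * f l g))"
        by (simp add: sum_distrib_left mult_ac)
      also have "\<dots> = (\<Sum>l<k. \<Sum>g\<in>carrier G. v $ l * (f l0 (inv g) * f l g))"
        by (rule sum.swap)
      also have "\<dots> = (\<Sum>l<k. v $ l * (\<Sum>g\<in>carrier G. f l0 (inv g) * f l g))"
        by (simp add: sum_distrib_left)
      also have "\<dots> = (\<Sum>l<k. v $ l * (if l = l0 then of_nat ng else 0))"
      proof (rule sum.cong[OF refl])
        fix l assume "l \<in> {..<k}"
        then have l: "l < k" by simp
        obtain n1 \<rho>1 where r1: "irreducible_rep G n1 \<rho>1" "f l = character G \<rho>1" using firr[OF l] by blast
        have "(f l0 = f l) = (l = l0)" using f l l0 unfolding bij_betw_def inj_on_def k_def by auto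
        then show "v $ l * (\<Sum>g\<in>carrier G. f l0 (inv g) * f l g) = v $ l * (if l = l0 then of_nat ng else 0)"
          using char_orth[OF r0(1) r1(1)] r0(2) r1(2) by simp
      qed
      also have "\<dots> = v $ l0 * of_nat ng" using l0 by (simp add: sum.delta)
      finally have "v $ l0 = 0" using ng_pos by simp
      then show "v $ l0 = 0\<^sub>v k $ l0" using l0 by simp
    qed (use v in simp)
  qed
  show ?thesis using inj_le[OF B inj] unfolding k_def by simp
qed

lemma fin_irr: "finite (irr_chars G)"
proof (rule ccontr)
  assume "infinite (irr_chars G)"
  then obtain F where F: "finite F" "card F = Suc ng" "F \<subseteq> irr_chars G"
    using infinite_arbitrarily_large by blast
  have "card F \<le> ng" by (rule card_irr_le[OF F(3) F(1)])
  with F(2) show False by simp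
qed

end

context fgrp
begin

definition Zs :: "'a \<Rightarrow> complex" where "Zs g = (\<Sum>\<chi>\<in>irr_chars G. central_idem G \<chi> g)"
definition uu :: "'a \<Rightarrow> complex" where "uu g = delta1 g - Zs g"

lemma conv_delta_left: "g \<in> carrier G \<Longrightarrow> conv delta1 f g = f g"
  unfolding conv_def delta1_def by (simp add: sum.delta fin)

lemma conv_delta_right:
  assumes g: "g \<in> carrier G" shows "conv f delta1 g = f g"
proof -
  have "conv f delta1 g = (\<Sum>x\<in>carrier G. if x = g then f x else 0)"
    unfolding conv_def delta1_def
  proof (rule sum.cong[OF refl])
    fix x assume x: "x \<in> carrier G"
    have "(inv x \<otimes> g = \<one>) = (x = g)" using inv_solve_left'[OF one_closed x g] x g by auto
    then show "f x * (if inv x \<otimes> g = \<one> then 1 else 0) = (if x = g then f x else 0)" by simp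
  qed
  also have "\<dots> = f g" using g by (simp add: sum.delta fin)
  finally show ?thesis .
qed

lemma conv_diff_left: "conv (\<lambda>x. a x - b x) h g = conv a h g - conv b h g"
  unfolding conv_def by (simp add: sum_subtractf left_diff_distrib)

lemma conv_diff_right: "conv f (\<lambda>x. a x - b x) g = conv f a g - conv f b g"
  unfolding conv_def by (simp add: sum_subtractf right_diff_distrib)

lemma conv_sum_left: "conv (\<lambda>x. \<Sum>\<chi>\<in>S. a \<chi> x) h g = (\<Sum>\<chi>\<in>S. conv (a \<chi>) h g)"
  unfolding conv_def by (simp add: sum_distrib_right sum.swap[of _ S])

lemma conv_sum_right: "conv f (\<lambda>x. \<Sum>\<chi>\<in>S. a \<chi> x) g = (\<Sum>\<chi>\<in>S. conv f (a \<chi>) g)"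
  unfolding conv_def by (simp add: sum_distrib_left sum.swap[of _ S])

lemma Zs_eq: "Zs = (\<lambda>x. \<Sum>\<chi>\<in>irr_chars G. central_idem G \<chi> x)"
  by (rule ext) (simp add: Zs_def)

lemma uu_eq: "uu = (\<lambda>x. delta1 x - Zs x)"
  by (rule ext) (simp add: uu_def)

lemma cidem_orth:
  assumes c: "\<chi> \<in> irr_chars G" and p: "\<psi> \<in> irr_chars G" and g: "g \<in> carrier G"
  shows "conv (central_idem G \<chi>) (central_idem G \<psi>) g = (if \<chi> = \<psi> then central_idem G \<psi> g else 0)"
proof -
  obtain m \<rho> where r: "irreducible_rep G m \<rho>" "\<chi> = character G \<rho>" using irr_charsE[OF c] by blast
  obtain n \<sigma> where s: "irreducible_rep G n \<sigma>" "\<psi> = character G \<sigma>" using irr_charsE[OF p] by blast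
  show ?thesis using e_orth[OF r(1) s(1) g] r(2) s(2) by simp
qed

lemma conv_Zs_Zs: assumes g: "g \<in> carrier G" shows "conv Zs Zs g = Zs g"
proof -
  have "conv Zs Zs g = (\<Sum>\<chi>\<in>irr_chars G. \<Sum>\<psi>\<in>irr_chars G. conv (central_idem G \<chi>) (central_idem G \<psi>) g)"
    unfolding Zs_eq by (simp add: conv_sum_left conv_sum_right)
  also have "\<dots> = (\<Sum>\<chi>\<in>irr_chars G. \<Sum>\<psi>\<in>irr_chars G. if \<chi> = \<psi> then central_idem G \<psi> g else 0)"
    using cidem_orth g by (intro sum.cong refl) simp
  also have "\<dots> = (\<Sum>\<chi>\<in>irr_chars G. central_idem G \<chi> g)"
    by (intro sum.cong refl) (simp add: sum.delta fin_irr)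
  finally show ?thesis by (simp add: Zs_def)
qed

lemma uu_idem: assumes g: "g \<in> carrier G" shows "conv uu uu g = uu g"
proof -
  have "conv uu uu g = conv delta1 uu g - conv Zs uu g"
    by (subst (1) uu_eq) (rule conv_diff_left)
  also have "conv Zs uu g = conv Zs delta1 g - conv Zs Zs g"
    by (subst uu_eq) (rule conv_diff_right)
  also have "\<dots> = 0" using conv_delta_right[OF g] conv_Zs_Zs[OF g] by simp
  finally show ?thesis using conv_delta_left[OF g] by simp
qed

lemma uu_class:
  assumes x: "x \<in> carrier G" and g: "g \<in> carrier G"
  shows "uu (x \<otimes> g \<otimes> inv x) = uu g"
proof -
  have d: "delta1 (x \<otimes> g \<otimes> inv x) = delta1 g"
  proof -
    have "(x \<otimes> g \<otimes> inv x = \<one>) = (g = \<one>)"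
    proof
      assume "x \<otimes> g \<otimes> inv x = \<one>"
      then have "x \<otimes> g = x" using x g by (metis inv_solve_right' m_closed inv_closed one_closed l_one)
      then show "g = \<one>" using x g l_cancel_one by blast
    qed (use x in simp)
    then show ?thesis unfolding delta1_def by simp
  qed
  have iv: "inv (x \<otimes> g \<otimes> inv x) = x \<otimes> inv g \<otimes> inv x"
    using x g by (simp add: inv_mult_group m_assoc)
  have c: "\<And>\<chi>. \<chi> \<in> irr_chars G \<Longrightarrow> central_idem G \<chi> (x \<otimes> g \<otimes> inv x) = central_idem G \<chi> g"
  proof -
    fix \<chi> assume "\<chi> \<in> irr_chars G"
    then obtain m \<rho> where r: "irreducible_rep G m \<rho>" "\<chi> = character G \<rho>" using irr_charsE by blast
    have "character G \<rho> (x \<otimes> inv g \<otimes> inv x) = character G \<rho> (inv g)"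
      using char_conj[OF irr_rep[OF r(1)] x] g by simp
    then show "central_idem G \<chi> (x \<otimes> g \<otimes> inv x) = central_idem G \<chi> g"
      unfolding central_idem_def iv r(2) by simp
  qed
  show ?thesis unfolding uu_def Zs_def using d c by simp
qed

lemma ext_delta1: assumes r: "is_rep G n \<rho>" shows "ext \<rho> n delta1 = 1\<^sub>m n"
proof (rule eq_matI)
  fix i j assume "i < dim_row (1\<^sub>m n)" "j < dim_col (1\<^sub>m n)"
  then have i: "i < n" and j: "j < n" by auto
  have "ext \<rho> n delta1 $$ (i,j) = (\<Sum>g\<in>carrier G. if g = \<one> then \<rho> g $$ (i,j) else 0)"
    unfolding ext_def delta1_def using i j by (simp cong: if_cong)
  also have "\<dots> = \<rho> \<one> $$ (i,j)" by (simp add: sum.delta fin)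
  finally show "ext \<rho> n delta1 $$ (i,j) = 1\<^sub>m n $$ (i,j)" using rep_one[OF r] i j by simp
qed auto

lemma ext_cidem_entry:
  assumes irr: "irreducible_rep G m \<rho>" and c: "\<chi> \<in> irr_chars G" and i: "i < m" and j: "j < m"
  shows "(\<Sum>g\<in>carrier G. central_idem G \<chi> g * \<rho> g $$ (i,j)) =
     (if \<chi> = character G \<rho> \<and> i = j then 1 else 0)"
proof -
  obtain n \<sigma> where s: "irreducible_rep G n \<sigma>" "\<chi> = character G \<sigma>" using irr_charsE[OF c] by blast
  have sr: "is_rep G n \<sigma>" and r: "is_rep G m \<rho>" and mpos: "m > 0" using s(1) irr irr_rep irr_pos by auto
  have "(\<Sum>g\<in>carrier G. central_idem G \<chi> g * \<rho> g $$ (i,j)) =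
        of_nat n / of_nat ng * (\<Sum>g\<in>carrier G. character G \<sigma> (inv g) * \<rho> g $$ (i,j))"
    unfolding s(2) using cidem_eq[OF sr] by (simp add: sum_distrib_left mult_ac)
  also have "\<dots> = of_nat n / of_nat ng * (if character G \<sigma> = character G \<rho> then (if i = j then of_nat ng / of_nat m else 0) else 0)"
    using lemma_K[OF s(1) irr i j] by simp
  also have "\<dots> = (if \<chi> = character G \<rho> \<and> i = j then 1 else 0)"
  proof (cases "character G \<sigma> = character G \<rho>")
    case True
    then have "n = m" using char_one[OF sr] char_one[OF r] by (metis of_nat_eq_iff)
    then show ?thesis using True s(2) mpos ng_pos by simp
  qed (use s(2) in simp)
  finally show ?thesis .
qed

lemma ext_uu_irr:
  assumes irr: "irreducible_rep G m \<rho>"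
  shows "ext \<rho> m uu = 0\<^sub>m m m"
proof (rule eq_matI)
  fix i j assume "i < dim_row (0\<^sub>m m m :: complex mat)" "j < dim_col (0\<^sub>m m m :: complex mat)"
  then have i: "i < m" and j: "j < m" by auto
  have r: "is_rep G m \<rho>" using irr irr_rep by auto
  have cr: "character G \<rho> \<in> irr_chars G" using irr_charsI[OF irr] .
  have "ext \<rho> m uu $$ (i,j) = (\<Sum>g\<in>carrier G. delta1 g * \<rho> g $$ (i,j)) -
        (\<Sum>\<chi>\<in>irr_chars G. \<Sum>g\<in>carrier G. central_idem G \<chi> g * \<rho> g $$ (i,j))"
    unfolding ext_def uu_def Zs_def using i j
    by (simp add: left_diff_distrib sum_subtractf sum_distrib_right sum.swap[of _ "irr_chars G"])
  also have "(\<Sum>g\<in>carrier G. delta1 g * \<rho> g $$ (i,j)) = (if i = j then 1 else 0)"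
    using ext_delta1[OF r] i j unfolding ext_def by (metis (no_types, lifting) case_prod_conv index_mat(1) index_one_mat(1))
  also have "(\<Sum>\<chi>\<in>irr_chars G. \<Sum>g\<in>carrier G. central_idem G \<chi> g * \<rho> g $$ (i,j)) =
     (\<Sum>\<chi>\<in>irr_chars G. if \<chi> = character G \<rho> then (if i = j then 1 else 0) else 0)"
    using ext_cidem_entry[OF irr _ i j] by (intro sum.cong refl) auto
  also have "\<dots> = (if i = j then 1 else 0)" using cr by (simp add: sum.delta' fin_irr)
  finally show "ext \<rho> m uu $$ (i,j) = 0\<^sub>m m m $$ (i,j)" using i j by simp
qed auto

end

context fgrp
begin

lemma detect: "is_rep G m \<rho> \<Longrightarrow> ext \<rho> m uu = 0\<^sub>m m m"
proof (induction m arbitrary: \<rho> rule: less_induct)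
  case (less m \<rho>)
  note r = less.prems
  define P where "P = ext \<rho> m uu"
  have Pc: "P \<in> carrier_mat m m" unfolding P_def by simp
  show ?case unfolding P_def[symmetric]
  proof (rule ccontr)
    assume Pnz: "P \<noteq> 0\<^sub>m m m"
    have PP: "P * P = P"
    proof -
      have "P * P = ext \<rho> m (conv uu uu)" unfolding P_def by (rule ext_conv[OF r, symmetric])
      also have "\<dots> = P" unfolding P_def by (rule ext_cong) (rule uu_idem)
      finally show ?thesis .
    qed
    have Pcomm: "\<And>g. g \<in> carrier G \<Longrightarrow> P * \<rho> g = \<rho> g * P"
      unfolding P_def by (rule ext_comm[OF r _ uu_class])
    have mpos: "m > 0"
    proof (rule ccontr)
      assume "\<not> m > 0"
      then have "m = 0" by simp
      then have "P = 0\<^sub>m m m" using Pc by (intro eq_matI) auto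
      with Pnz show False by simp
    qed
    have nirr: "\<not> irreducible_rep G m \<rho>" using ext_uu_irr Pnz unfolding P_def by blast
    obtain W where W: "inv_sub G m \<rho> W" "W \<noteq> {0\<^sub>v m}" "W \<noteq> carrier_vec m"
      using not_irr[OF r mpos nirr] by blast
    have Pv: "\<And>v. v \<in> carrier_vec m \<Longrightarrow> P *\<^sub>v (P *\<^sub>v v) = P *\<^sub>v v"
      using PP Pc by (metis assoc_mult_mat_vec)
    have "\<exists>W0. inv_sub G m \<rho> W0 \<and> W0 \<noteq> {0\<^sub>v m} \<and> W0 \<noteq> carrier_vec m \<and> (\<forall>w\<in>W0. P *\<^sub>v w = w)"
    proof (cases "P = 1\<^sub>m m")
      case True
      have "\<forall>w\<in>W. P *\<^sub>v w = w" using W(1) True unfolding inv_sub_def by auto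
      then show ?thesis using W by blast
    next
      case False
      define W0 where "W0 = {P *\<^sub>v v | v. v \<in> carrier_vec m}"
      have fix0: "\<forall>w\<in>W0. P *\<^sub>v w = w" unfolding W0_def using Pv by blast
      have "inv_sub G m \<rho> W0"
        unfolding inv_sub_def W0_def
      proof (intro conjI ballI allI)
        fix x y assume "x \<in> {P *\<^sub>v v | v. v \<in> carrier_vec m}" "y \<in> {P *\<^sub>v v | v. v \<in> carrier_vec m}"
        then obtain a b where "a \<in> carrier_vec m" "b \<in> carrier_vec m" "x = P *\<^sub>v a" "y = P *\<^sub>v b" by auto
        then show "x + y \<in> {P *\<^sub>v v | v. v \<in> carrier_vec m}"
          using Pc by (auto simp: mult_add_distrib_mat_vec intro!: exI[of _ "a + b"])
      next
        fix c :: complex and x assume "x \<in> {P *\<^sub>v v | v. v \<in> carrier_vec m}"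
        then obtain a where "a \<in> carrier_vec m" "x = P *\<^sub>v a" by auto
        then show "c \<cdot>\<^sub>v x \<in> {P *\<^sub>v v | v. v \<in> carrier_vec m}"
          using Pc by (auto simp: mult_mat_vec intro!: exI[of _ "c \<cdot>\<^sub>v a"])
      next
        fix g x assume g: "g \<in> carrier G" and "x \<in> {P *\<^sub>v v | v. v \<in> carrier_vec m}"
        then obtain a where a: "a \<in> carrier_vec m" "x = P *\<^sub>v a" by auto
        have rg: "\<rho> g \<in> carrier_mat m m" using rep_carrier[OF r g] .
        have "\<rho> g *\<^sub>v x = (\<rho> g * P) *\<^sub>v a" using Pc rg a by simp
        also have "\<dots> = (P * \<rho> g) *\<^sub>v a" using Pcomm g by simp
        also have "\<dots> = P *\<^sub>v (\<rho> g *\<^sub>v a)" using Pc rg a by simp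
        finally show "\<rho> g *\<^sub>v x \<in> {P *\<^sub>v v | v. v \<in> carrier_vec m}" using rg a by auto
      next
        show "0\<^sub>v m \<in> {P *\<^sub>v v | v. v \<in> carrier_vec m}"
          using Pc by (auto intro!: exI[of _ "0\<^sub>v m"])
      next
        show "{P *\<^sub>v v | v. v \<in> carrier_vec m} \<subseteq> carrier_vec m" using Pc by auto
      qed
      moreover have "W0 \<noteq> {0\<^sub>v m}"
      proof
        assume "W0 = {0\<^sub>v m}"
        then have "P = 0\<^sub>m m m" by (intro mat_eq_zero_by_vecs[OF Pc]) (simp add: W0_def set_eq_iff, blast)
        with Pnz show False by simp
      qed
      moreover have "W0 \<noteq> carrier_vec m"
      proof
        assume W0c: "W0 = carrier_vec m"
        have "P = 1\<^sub>m m"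
        proof (rule mat_eq_by_vecs[OF Pc])
          fix v :: "complex vec" assume v: "v \<in> carrier_vec m"
          then have "v \<in> W0" using W0c by simp
          then have "P *\<^sub>v v = v" using fix0 by blast
          then show "P *\<^sub>v v = 1\<^sub>m m *\<^sub>v v" using v by simp
        qed simp
        with False show False by simp
      qed
      ultimately show ?thesis using fix0 by blast
    qed
    then obtain W0 where W0: "inv_sub G m \<rho> W0" "W0 \<noteq> {0\<^sub>v m}" "W0 \<noteq> carrier_vec m" "\<forall>w\<in>W0. P *\<^sub>v w = w"
      by blast
    have W0s: "W0 \<subseteq> carrier_vec m" "0\<^sub>v m \<in> W0" "\<And>x y. x \<in> W0 \<Longrightarrow> y \<in> W0 \<Longrightarrow> x + y \<in> W0"
      "\<And>c x. x \<in> W0 \<Longrightarrow> (c::complex) \<cdot>\<^sub>v x \<in> W0" using W0(1) unfolding inv_sub_def by blast+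
    obtain k B where B: "B \<in> carrier_mat m k" and inj: "\<forall>v\<in>carrier_vec k. B *\<^sub>v v = 0\<^sub>v m \<longrightarrow> v = 0\<^sub>v k"
      and cols: "\<forall>j<k. col B j \<in> W0" and span: "\<forall>w\<in>W0. \<exists>v\<in>carrier_vec k. B *\<^sub>v v = w"
      and km: "W0 \<noteq> carrier_vec m \<longrightarrow> k < m" and kpos: "W0 \<noteq> {0\<^sub>v m} \<longrightarrow> 0 < k"
      using basis_exists[OF W0s] by blast
    have km': "k < m" and kpos': "0 < k" using km kpos W0 by auto
    obtain R where R: "is_rep G k R" and BR: "\<forall>g\<in>carrier G. B * R g = \<rho> g * B"
      using subrep[OF r W0(1) B inj cols span] by blast
    have e1: "B * ext R k uu = P * B" unfolding P_def
      by (rule ext_intertwine[OF B r R]) (use BR in blast)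
    have PB: "P * B = B"
    proof (rule eq_matI)
      fix i j assume i: "i < dim_row B" and j: "j < dim_col B"
      have i': "i < m" and j': "j < k" using i j B by auto
      have "(P * B) $$ (i,j) = (P *\<^sub>v col B j) $ i" using Pc B i' j' by (simp add: index_mult_mat)
      also have "P *\<^sub>v col B j = col B j" using W0(4) cols j' by blast
      also have "col B j $ i = B $$ (i,j)" using B i' j' by simp
      finally show "(P * B) $$ (i,j) = B $$ (i,j)" .
    qed (use Pc B in auto)
    have "B * ext R k uu = B * 1\<^sub>m k" using e1 PB B by simp
    then have "ext R k uu = 1\<^sub>m k" by (rule inj_cancel[OF B inj ext_carrier one_carrier_mat])
    moreover have "ext R k uu = 0\<^sub>m k k" by (rule less.IH[OF km' R])
    ultimately have "(1\<^sub>m k :: complex mat) $$ (0,0) = 0\<^sub>m k k $$ (0,0)" by simp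
    then show False using kpos' by simp
  qed
qed

lemma uu_zero:
  assumes g: "g \<in> carrier G" shows "uu g = 0"
proof (rule ccontr)
  assume nz: "uu g \<noteq> 0"
  obtain e where e: "bij_betw e {..<ng} (carrier G)" using enum_G by blast
  have einj: "\<And>i j. i < ng \<Longrightarrow> j < ng \<Longrightarrow> e i = e j \<Longrightarrow> i = j"
    using e unfolding bij_betw_def inj_on_def by blast
  have esurj: "\<And>h. h \<in> carrier G \<Longrightarrow> \<exists>i<ng. e i = h"
  proof -
    fix h assume "h \<in> carrier G"
    then have "h \<in> e ` {..<ng}" using e unfolding bij_betw_def by simp
    then show "\<exists>i<ng. e i = h" by auto
  qed
  have ein: "\<And>i. i < ng \<Longrightarrow> e i \<in> carrier G" using e unfolding bij_betw_def by auto
  define \<rho>r where "\<rho>r = (\<lambda>h. mat ng ng (\<lambda>(i,j). if e i = h \<otimes> e j then 1 else (0::complex)))"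
  have rr: "is_rep G ng \<rho>r"
    unfolding is_rep_def
  proof (intro conjI ballI)
    fix h assume "h \<in> carrier G" then show "\<rho>r h \<in> carrier_mat ng ng" unfolding \<rho>r_def by simp
  next
    fix g h assume g: "g \<in> carrier G" and h: "h \<in> carrier G"
    show "\<rho>r (g \<otimes> h) = \<rho>r g * \<rho>r h"
    proof (rule eq_matI)
      fix i j assume i: "i < dim_row (\<rho>r g * \<rho>r h)" and j: "j < dim_col (\<rho>r g * \<rho>r h)"
      have i': "i < ng" and j': "j < ng" using i j unfolding \<rho>r_def by auto
      obtain c0 where c0: "c0 < ng" "e c0 = h \<otimes> e j" using esurj[of "h \<otimes> e j"] h ein[OF j'] by auto
      have "(\<rho>r g * \<rho>r h) $$ (i,j) = (\<Sum>c<ng. (if e i = g \<otimes> e c then 1 else 0) * (if e c = h \<otimes> e j then 1 else 0))"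
        using mat_mult_entry[of "\<rho>r g" ng ng "\<rho>r h" ng i j] i' j' unfolding \<rho>r_def by simp
      also have "\<dots> = (\<Sum>c<ng. if c = c0 then (if e i = g \<otimes> e c0 then 1 else 0) else 0)"
      proof (rule sum.cong[OF refl])
        fix c assume "c \<in> {..<ng}"
        then have c: "c < ng" by simp
        have "(e c = h \<otimes> e j) = (c = c0)" using einj[OF c c0(1)] c0 by auto
        then show "(if e i = g \<otimes> e c then 1 else 0) * (if e c = h \<otimes> e j then 1 else 0) =
          (if c = c0 then (if e i = g \<otimes> e c0 then 1 else 0) else (0::complex))" by auto
      qed
      also have "\<dots> = (if e i = g \<otimes> e c0 then 1 else 0)" using c0 by (simp add: sum.delta)
      also have "\<dots> = \<rho>r (g \<otimes> h) $$ (i,j)" unfolding \<rho>r_def using i' j' c0 g h ein[OF j'] by (simp add: m_assoc)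
      finally show "\<rho>r (g \<otimes> h) $$ (i,j) = (\<rho>r g * \<rho>r h) $$ (i,j)" by simp
    qed (simp_all add: \<rho>r_def)
  next
    show "\<rho>r \<one> = 1\<^sub>m ng"
    proof (rule eq_matI)
      fix i j assume "i < dim_row (1\<^sub>m ng)" "j < dim_col (1\<^sub>m ng)"
      then have i: "i < ng" and j: "j < ng" by auto
      have "(e i = \<one> \<otimes> e j) = (i = j)" using einj[OF i j] ein[OF j] by auto
      then show "\<rho>r \<one> $$ (i,j) = 1\<^sub>m ng $$ (i,j)" unfolding \<rho>r_def using i j by simp
    qed (simp_all add: \<rho>r_def)
  qed
  obtain i0 where i0: "i0 < ng" "e i0 = g" using esurj[OF g] by auto
  obtain j0 where j0: "j0 < ng" "e j0 = \<one>" using esurj[OF one_closed] by auto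
  have "ext \<rho>r ng uu $$ (i0,j0) = (\<Sum>h\<in>carrier G. uu h * (if e i0 = h \<otimes> e j0 then 1 else 0))"
    unfolding ext_def \<rho>r_def using i0 j0 by simp
  also have "\<dots> = (\<Sum>h\<in>carrier G. if h = g then uu h else 0)"
    using i0 j0 by (intro sum.cong refl) auto
  also have "\<dots> = uu g" using g by (simp add: sum.delta fin)
  finally have "ext \<rho>r ng uu $$ (i0,j0) = uu g" .
  moreover have "ext \<rho>r ng uu $$ (i0,j0) = 0" using detect[OF rr] i0 j0 by simp
  ultimately show False using nz by simp
qed

lemma completeness: "g \<in> carrier G \<Longrightarrow> (\<Sum>\<chi>\<in>irr_chars G. central_idem G \<chi> g) = delta1 g"
  using uu_zero unfolding uu_def Zs_def by simp

end

context fgrp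
begin

abbreviation NN where "NN \<equiv> derived G (carrier G)"

lemma NN_sub: "subgroup NN G" by (rule derived_is_subgroup) simp

lemma NN_carrier: "NN \<subseteq> carrier G" using derived_in_carrier by simp

lemma comm_in_NN: "a \<in> carrier G \<Longrightarrow> b \<in> carrier G \<Longrightarrow> a \<otimes> b \<otimes> inv a \<otimes> inv b \<in> NN"
  unfolding derived_def by (rule generate.incl) blast

definition qn :: "('a \<Rightarrow> complex) \<Rightarrow> bool" where
  "qn f \<longleftrightarrow> (\<forall>g\<in>carrier G. f g \<in> \<rat> \<and> (g \<notin> NN \<longrightarrow> f g = 0))"

lemma qn_delta: "qn delta1"
  unfolding qn_def delta1_def using subgroup.one_closed[OF NN_sub] by auto

lemma qn_ccomm: "qn ccomm"
  unfolding qn_def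
proof (intro ballI conjI impI)
  fix g assume g: "g \<in> carrier G"
  show "ccomm g \<in> \<rat>" unfolding ccomm_def by (intro Rats_sum) auto
  assume gN: "g \<notin> NN"
  show "ccomm g = 0" unfolding ccomm_def
    using comm_in_NN gN by (intro sum.neutral ballI) auto
qed

lemma qn_lin: "qn f \<Longrightarrow> qn h \<Longrightarrow> a \<in> \<rat> \<Longrightarrow> b \<in> \<rat> \<Longrightarrow> qn (\<lambda>g. a * f g + b * h g)"
  unfolding qn_def by auto

lemma qn_conv:
  assumes f: "qn f" and h: "qn h" shows "qn (conv f h)"
  unfolding qn_def
proof (intro ballI conjI impI)
  fix g assume g: "g \<in> carrier G"
  show "conv f h g \<in> \<rat>" unfolding conv_def
    using f h g unfolding qn_def by (intro Rats_sum Rats_mult) auto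
  assume gN: "g \<notin> NN"
  show "conv f h g = 0" unfolding conv_def
  proof (intro sum.neutral ballI)
    fix x assume x: "x \<in> carrier G"
    show "f x * h (inv x \<otimes> g) = 0"
    proof (cases "x \<in> NN")
      case True
      have "inv x \<otimes> g \<notin> NN"
      proof
        assume "inv x \<otimes> g \<in> NN"
        then have "x \<otimes> (inv x \<otimes> g) \<in> NN" using True subgroup.m_closed[OF NN_sub] by blast
        then show False using x g gN by (simp add: m_assoc[symmetric])
      qed
      then show ?thesis using h x g unfolding qn_def by simp
    next
      case False
      then show ?thesis using f x unfolding qn_def by simp
    qed
  qed
qed

lemma conv_assoc:
  assumes g: "g \<in> carrier G"
  shows "conv f (conv h k) g = conv (conv f h) k g"
proof -
  have "conv f (conv h k) g = (\<Sum>x\<in>carrier G. \<Sum>y\<in>carrier G. f x * h y * k (inv y \<otimes> (inv x \<otimes> g)))"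
    unfolding conv_def by (simp add: sum_distrib_left mult_ac)
  also have "\<dots> = (\<Sum>x\<in>carrier G. \<Sum>z\<in>carrier G. f x * h (inv x \<otimes> z) * k (inv z \<otimes> g))"
  proof (rule sum.cong[OF refl])
    fix x assume x: "x \<in> carrier G"
    have "(\<Sum>z\<in>carrier G. f x * h (inv x \<otimes> z) * k (inv z \<otimes> g)) =
          (\<Sum>y\<in>carrier G. f x * h (inv x \<otimes> (x \<otimes> y)) * k (inv (x \<otimes> y) \<otimes> g))"
      by (rule sum_lmult[OF x, symmetric])
    also have "\<dots> = (\<Sum>y\<in>carrier G. f x * h y * k (inv y \<otimes> (inv x \<otimes> g)))"
      using x g by (intro sum.cong refl) (simp add: m_assoc[symmetric] inv_mult_group)
    finally show "(\<Sum>y\<in>carrier G. f x * h y * k (inv y \<otimes> (inv x \<otimes> g))) =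
          (\<Sum>z\<in>carrier G. f x * h (inv x \<otimes> z) * k (inv z \<otimes> g))" by simp
  qed
  also have "\<dots> = (\<Sum>z\<in>carrier G. \<Sum>x\<in>carrier G. f x * h (inv x \<otimes> z) * k (inv z \<otimes> g))"
    by (rule sum.swap)
  also have "\<dots> = conv (conv f h) k g"
    unfolding conv_def by (simp add: sum_distrib_right)
  finally show ?thesis .
qed

lemma conv_cong_left: "(\<And>x. x \<in> carrier G \<Longrightarrow> f x = f' x) \<Longrightarrow> conv f h g = conv f' h g"
  unfolding conv_def by simp

lemma conv_smult_left: "conv (\<lambda>x. c * f x) h g = c * conv f h g"
  unfolding conv_def by (simp add: sum_distrib_left mult_ac)

lemma conv_lin_right: "conv f (\<lambda>x. (A x - a * B x) / c) g = (conv f A g - a * conv f B g) / c"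
  unfolding conv_def by (simp add: sum_divide_distrib sum_subtractf right_diff_distrib sum_distrib_left mult_ac diff_divide_distrib)

definition lam :: "('a \<Rightarrow> complex) \<Rightarrow> complex" where
  "lam \<chi> = (of_nat ng / \<chi> \<one>)^2"

fun Fp :: "complex \<Rightarrow> complex list \<Rightarrow> 'a \<Rightarrow> complex" where
  "Fp ld [] = delta1"
| "Fp ld (a # as) = (\<lambda>g. (conv ccomm (Fp ld as) g - a * Fp ld as g) / (ld - a))"

lemma Fp_qn: "ld \<in> \<rat> \<Longrightarrow> set as \<subseteq> \<rat> \<Longrightarrow> qn (Fp ld as)"
proof (induction as)
  case Nil then show ?case by (simp add: qn_delta)
next
  case (Cons a as)
  have q: "qn (Fp ld as)" using Cons by simp
  have a: "a \<in> \<rat>" using Cons by simp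
  have c: "1 / (ld - a) \<in> \<rat>" using a Cons.prems(1) by simp
  have "qn (\<lambda>g. (1 / (ld - a)) * conv ccomm (Fp ld as) g + (- a / (ld - a)) * Fp ld as g)"
    by (rule qn_lin[OF qn_conv[OF qn_ccomm q] q c]) (use a Cons.prems(1) in simp)
  moreover have "(\<lambda>g. (1 / (ld - a)) * conv ccomm (Fp ld as) g + (- a / (ld - a)) * Fp ld as g) = Fp ld (a # as)"
    by (rule ext) (simp add: field_simps diff_divide_distrib)
  ultimately show ?case by simp
qed

lemma e_Fp:
  assumes c: "\<chi> \<in> irr_chars G" and g: "g \<in> carrier G"
  shows "conv (central_idem G \<chi>) (Fp ld as) g = (\<Prod>a\<leftarrow>as. (lam \<chi> - a) / (ld - a)) * central_idem G \<chi> g"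
  using g
proof (induction as arbitrary: g)
  case Nil
  then show ?case by (simp add: conv_delta_right)
next
  case (Cons a as)
  obtain m \<rho> where r: "irreducible_rep G m \<rho>" "\<chi> = character G \<rho>" using irr_charsE[OF c] by blast
  have chi1: "\<chi> \<one> = of_nat m" using char_one[OF irr_rep[OF r(1)]] r(2) by simp
  have ec: "\<And>x. x \<in> carrier G \<Longrightarrow> conv (central_idem G \<chi>) ccomm x = lam \<chi> * central_idem G \<chi> x"
    using e_comm[OF r(1)] r(2) chi1 unfolding lam_def by simp
  have "conv (central_idem G \<chi>) (Fp ld (a # as)) g =
     (conv (central_idem G \<chi>) (conv ccomm (Fp ld as)) g - a * conv (central_idem G \<chi>) (Fp ld as) g) / (ld - a)"
    by (simp only: Fp.simps conv_lin_right)
  also have "conv (central_idem G \<chi>) (conv ccomm (Fp ld as)) g = lam \<chi> * conv (central_idem G \<chi>) (Fp ld as) g"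
  proof -
    have "conv (central_idem G \<chi>) (conv ccomm (Fp ld as)) g = conv (conv (central_idem G \<chi>) ccomm) (Fp ld as) g"
      by (rule conv_assoc[OF Cons.prems])
    also have "\<dots> = conv (\<lambda>x. lam \<chi> * central_idem G \<chi> x) (Fp ld as) g"
      by (rule conv_cong_left) (rule ec)
    also have "\<dots> = lam \<chi> * conv (central_idem G \<chi>) (Fp ld as) g"
      by (rule conv_smult_left)
    finally show ?thesis .
  qed
  finally show ?case using Cons.IH[OF Cons.prems] by (simp add: field_simps)
qed

end

lemma prod_list_map_one: "(\<And>x. x \<in> set xs \<Longrightarrow> f x = 1) \<Longrightarrow> prod_list (map f xs) = (1::'b::monoid_mult)"
  by (induction xs) auto

context fgrp
begin

lemma irr_deg: "\<chi> \<in> irr_chars G \<Longrightarrow> \<exists>n>0. \<chi> \<one> = of_nat n"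
  using irr_charsE char_one irr_rep irr_pos by metis

lemma lam_rat: "\<chi> \<in> irr_chars G \<Longrightarrow> lam \<chi> \<in> \<rat>"
  using irr_deg unfolding lam_def by force

lemma lam_eq_iff:
  assumes c: "\<chi> \<in> irr_chars G"
  shows "(lam \<chi> = (of_nat ng / of_nat d)^2) = (\<chi> \<one> = of_nat d)"
proof
  obtain n where n: "n > 0" "\<chi> \<one> = of_nat n" using irr_deg[OF c] by blast
  assume e: "lam \<chi> = (of_nat ng / of_nat d)^2"
  show "\<chi> \<one> = of_nat d"
  proof (cases "d = 0")
    case True
    then have "(of_nat ng / of_nat n :: complex)^2 = 0" using e n unfolding lam_def by simp
    then show ?thesis using ng_pos n by simp
  next
    case False
    have "(of_nat ng / of_nat n :: complex)^2 = (of_nat ng / of_nat d)^2" using e n unfolding lam_def by simp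
    then have "ng = 0 \<or> (of_nat n :: complex)^2 = (of_nat d)^2"
      using n False by (simp add: field_simps power_divide)
    then have "(of_nat n :: complex)^2 = (of_nat d)^2" using ng_pos by simp
    then have "of_nat (n^2) = (of_nat (d^2) :: complex)" by simp
    then have "n^2 = d^2" by (rule of_nat_eq_iff[THEN iffD1])
    then have "d^2 = n^2" by simp
    then have "d = n" by (simp add: power2_eq_iff_nonneg)
    then show ?thesis using n by simp
  qed
next
  assume "\<chi> \<one> = of_nat d" then show "lam \<chi> = (of_nat ng / of_nat d)^2" unfolding lam_def by simp
qed

lemma E_deg_eq: "E_deg G d = (\<lambda>g. \<Sum>\<chi>\<in>{\<chi>\<in>irr_chars G. \<chi> \<one> = of_nat d}. central_idem G \<chi> g)"
  by (rule ext) (simp add: E_deg_def)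

lemma E_qn: "\<exists>F. qn F \<and> (\<forall>g\<in>carrier G. E_deg G d g = F g)"
proof -
  define ld :: complex where "ld = (of_nat ng / of_nat d)^2"
  obtain ls where ls: "set ls = lam ` irr_chars G - {ld}"
    using finite_list[of "lam ` irr_chars G - {ld}"] fin_irr by blast
  have ldq: "ld \<in> \<rat>" unfolding ld_def by simp
  have lsq: "set ls \<subseteq> \<rat>" using ls lam_rat by auto
  have coef: "\<And>\<chi>. \<chi> \<in> irr_chars G \<Longrightarrow> prod_list (map (\<lambda>a. (lam \<chi> - a) / (ld - a)) ls) =
      (if \<chi> \<one> = of_nat d then 1 else 0)"
  proof -
    fix \<chi> assume c: "\<chi> \<in> irr_chars G"
    show "prod_list (map (\<lambda>a. (lam \<chi> - a) / (ld - a)) ls) = (if \<chi> \<one> = of_nat d then 1 else 0)"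
    proof (cases "\<chi> \<one> = of_nat d")
      case True
      then have "lam \<chi> = ld" using lam_eq_iff[OF c] unfolding ld_def by simp
      then show ?thesis using True ls by (auto intro!: prod_list_map_one)
    next
      case False
      then have "lam \<chi> \<noteq> ld" using lam_eq_iff[OF c] unfolding ld_def by simp
      then have "lam \<chi> \<in> set ls" using ls c by auto
      then have "0 \<in> set (map (\<lambda>a. (lam \<chi> - a) / (ld - a)) ls)" by force
      then show ?thesis using False by (simp add: prod_list_zero_iff)
    qed
  qed
  have "\<forall>g\<in>carrier G. E_deg G d g = Fp ld ls g"
  proof
    fix g assume g: "g \<in> carrier G"
    have "Fp ld ls g = conv delta1 (Fp ld ls) g" by (rule conv_delta_left[OF g, symmetric])
    also have "\<dots> = conv Zs (Fp ld ls) g"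
      by (rule conv_cong_left) (use completeness in \<open>simp add: Zs_def\<close>)
    also have "\<dots> = (\<Sum>\<chi>\<in>irr_chars G. conv (central_idem G \<chi>) (Fp ld ls) g)"
      unfolding Zs_eq by (rule conv_sum_left)
    also have "\<dots> = (\<Sum>\<chi>\<in>irr_chars G. (if \<chi> \<one> = of_nat d then central_idem G \<chi> g else 0))"
      using e_Fp[OF _ g] coef by (intro sum.cong refl) simp
    also have "\<dots> = E_deg G d g"
      unfolding E_deg_def using fin_irr by (simp add: sum.inter_filter)
    finally show "E_deg G d g = Fp ld ls g" by simp
  qed
  then show ?thesis using Fp_qn[OF ldq lsq] by blast
qed

lemma E_rat: "g \<in> carrier G \<Longrightarrow> E_deg G d g \<in> \<rat>"
  using E_qn[of d] unfolding qn_def by metis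

lemma E_supp: "g \<in> carrier G \<Longrightarrow> g \<notin> NN \<Longrightarrow> E_deg G d g = 0"
  using E_qn[of d] unfolding qn_def by metis

lemma E_idem: assumes g: "g \<in> carrier G" shows "conv (E_deg G d) (E_deg G d) g = E_deg G d g"
proof -
  let ?S = "{\<chi>\<in>irr_chars G. \<chi> \<one> = of_nat d}"
  have finS: "finite ?S" using fin_irr by simp
  have "conv (E_deg G d) (E_deg G d) g = (\<Sum>\<chi>\<in>?S. \<Sum>\<psi>\<in>?S. conv (central_idem G \<chi>) (central_idem G \<psi>) g)"
    unfolding E_deg_eq by (simp add: conv_sum_left conv_sum_right)
  also have "\<dots> = (\<Sum>\<chi>\<in>?S. \<Sum>\<psi>\<in>?S. if \<chi> = \<psi> then central_idem G \<psi> g else 0)"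
    using cidem_orth g by (intro sum.cong refl) simp
  also have "\<dots> = (\<Sum>\<chi>\<in>?S. central_idem G \<chi> g)"
    using finS by (intro sum.cong refl) (simp add: sum.delta)
  finally show ?thesis by (simp add: E_deg_def)
qed

lemma cidem_class:
  assumes c: "\<chi> \<in> irr_chars G" and x: "x \<in> carrier G" and g: "g \<in> carrier G"
  shows "central_idem G \<chi> (x \<otimes> g \<otimes> inv x) = central_idem G \<chi> g"
proof -
  obtain m \<rho> where r: "irreducible_rep G m \<rho>" "\<chi> = character G \<rho>" using irr_charsE[OF c] by blast
  have iv: "inv (x \<otimes> g \<otimes> inv x) = x \<otimes> inv g \<otimes> inv x"
    using x g by (simp add: inv_mult_group m_assoc)
  have "character G \<rho> (x \<otimes> inv g \<otimes> inv x) = character G \<rho> (inv g)"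
    using char_conj[OF irr_rep[OF r(1)] x] g by simp
  then show ?thesis unfolding central_idem_def iv r(2) by simp
qed

lemma E_class: "x \<in> carrier G \<Longrightarrow> g \<in> carrier G \<Longrightarrow> E_deg G d (x \<otimes> g \<otimes> inv x) = E_deg G d g"
  unfolding E_deg_def using cidem_class by simp

end

lemma of_int_if: "(of_int (if P then 1 else 0) :: 'a::ring_1) = (if P then 1 else 0)"
  by simp

lemma rat_root_int:
  fixes p :: "int poly" and q :: rat
  assumes mon: "lead_coeff p = 1" and root: "poly (map_poly of_int p) q = 0"
  shows "q \<in> \<int>"
proof -
  obtain a b where qab: "quotient_of q = (a,b)" by (cases "quotient_of q")
  have b0: "b > 0" using quotient_of_denom_pos[OF qab] .
  have cop: "coprime a b" using quotient_of_coprime[OF qab] .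
  have qd: "q = of_int a / of_int b" using quotient_of_div[OF qab] .
  define n where "n = degree p"
  have degm: "degree (map_poly (of_int :: int \<Rightarrow> rat) p) = n"
    unfolding n_def by (rule degree_map_poly) simp
  have "poly (map_poly of_int p) q = (\<Sum>i\<le>n. of_int (coeff p i) * q ^ i)"
    by (simp add: poly_altdef degm n_def)
  then have z: "(\<Sum>i\<le>n. of_int (coeff p i) * q ^ i) = 0" using root by simp
  have "(\<Sum>i\<le>n. of_int (coeff p i) * q ^ i) * of_int b ^ n = (\<Sum>i\<le>n. of_int (coeff p i * a ^ i * b ^ (n - i)) :: rat)"
    unfolding sum_distrib_right
  proof (rule sum.cong[OF refl])
    fix i assume "i \<in> {..n}"
    then have i: "i \<le> n" by simp
    have "(of_int b :: rat) ^ n = of_int b ^ i * of_int b ^ (n - i)"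
      using i by (simp add: power_add[symmetric])
    then show "of_int (coeff p i) * q ^ i * of_int b ^ n = (of_int (coeff p i * a ^ i * b ^ (n - i)) :: rat)"
      using b0 by (simp add: qd power_divide)
  qed
  then have "(of_int (\<Sum>i\<le>n. coeff p i * a ^ i * b ^ (n - i)) :: rat) = 0" using z by simp
  then have S0: "(\<Sum>i\<le>n. coeff p i * a ^ i * b ^ (n - i)) = 0" by (simp only: of_int_eq_0_iff)
  have "(\<Sum>i\<le>n. coeff p i * a ^ i * b ^ (n - i)) = (\<Sum>i<Suc n. coeff p i * a ^ i * b ^ (n - i))"
    by (simp only: lessThan_Suc_atMost)
  also have "\<dots> = coeff p n * a ^ n * b ^ 0 + (\<Sum>i<n. coeff p i * a ^ i * b ^ (n - i))"
    by (simp only: sum.lessThan_Suc diff_self_eq_0 add.commute)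
  also have "coeff p n = 1" using mon unfolding n_def by simp
  finally have e: "a ^ n = - (\<Sum>i<n. coeff p i * a ^ i * b ^ (n - i))" using S0 by simp
  have "b dvd (\<Sum>i<n. coeff p i * a ^ i * b ^ (n - i))"
  proof (rule dvd_sum)
    fix i assume "i \<in> {..<n}"
    then have "n - i = Suc (n - i - 1)" by simp
    then show "b dvd coeff p i * a ^ i * b ^ (n - i)" by simp
  qed
  then have bd: "b dvd a ^ n" using e by simp
  have cb: "coprime b (a ^ n)" using cop by (simp add: coprime_commute)
  have "is_unit b" by (rule coprime_common_divisor[OF cb dvd_refl bd])
  then have "b = 1" using b0 by simp
  then show ?thesis using qd by simp
qed

lemma int_eigen_rat:
  fixes M :: "int mat" and s :: complex
  assumes M: "M \<in> carrier_mat K K" and ev: "eigenvalue (map_mat of_int M) s" and sq: "s \<in> \<rat>"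
  shows "s \<in> \<int>"
proof -
  have Mc: "map_mat (of_int :: int \<Rightarrow> complex) M \<in> carrier_mat K K" using M by simp
  have "poly (char_poly (map_mat of_int M)) s = 0" using eigenvalue_root_char_poly[OF Mc] ev by simp
  also have "char_poly (map_mat (of_int :: int \<Rightarrow> complex) M) = map_poly of_int (char_poly M)"
    by (rule of_int_hom.char_poly_hom[OF M])
  finally have r0: "poly (map_poly (of_int :: int \<Rightarrow> complex) (char_poly M)) s = 0" .
  obtain q where q: "s = of_rat q" using sq by (auto elim: Rats_cases)
  define cp where "cp = char_poly M"
  have mon: "lead_coeff cp = 1" using degree_monic_char_poly[OF M] unfolding cp_def by simp
  have d1: "degree (map_poly (of_int :: int \<Rightarrow> complex) cp) = degree cp" by (rule degree_map_poly) simp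
  have d2: "degree (map_poly (of_int :: int \<Rightarrow> rat) cp) = degree cp" by (rule degree_map_poly) simp
  have "poly (map_poly (of_int :: int \<Rightarrow> complex) cp) (of_rat q) = of_rat (poly (map_poly of_int cp) q)"
    by (simp add: poly_altdef d1 d2 of_rat_sum of_rat_mult of_rat_power)
  then have "of_rat (poly (map_poly of_int cp) q) = (0::complex)" using r0 q unfolding cp_def by simp
  then have "poly (map_poly of_int cp) q = 0" by simp
  then have "q \<in> \<int>" by (rule rat_root_int[OF mon])
  then show ?thesis using q by (auto elim: Ints_cases)
qed

lemma roots_unity_int:
  fixes f :: "'i \<Rightarrow> complex"
  assumes finI: "finite I" and K: "K > 0" and rt: "\<And>i. i \<in> I \<Longrightarrow> f i = 0 \<or> f i ^ K = 1"
    and sq: "(\<Sum>i\<in>I. f i) \<in> \<rat>"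
  shows "(\<Sum>i\<in>I. f i) \<in> \<int>"
proof -
  define z where "z = cis (2 * pi / real K)"
  have zK: "z ^ K = 1" unfolding z_def using K by (simp add: DeMoivre)
  define I' where "I' = {i\<in>I. f i \<noteq> 0}"
  have finI': "finite I'" using finI unfolding I'_def by simp
  have ex: "\<And>i. i \<in> I' \<Longrightarrow> \<exists>k<K. f i = z ^ k"
  proof -
    fix i assume i: "i \<in> I'"
    then have "f i ^ K = 1" using rt unfolding I'_def by auto
    then have "f i \<in> (\<lambda>k. cis (2 * pi * real k / real K)) ` {..<K}"
      using bij_betw_roots_unity[OF K] unfolding bij_betw_def by blast
    then obtain k where k: "k < K" "f i = cis (2 * pi * real k / real K)" by auto
    have "cis (2 * pi * real k / real K) = z ^ k" unfolding z_def by (simp add: DeMoivre mult_ac)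
    then have "f i = z ^ k" using k(2) by simp
    then show "\<exists>k<K. f i = z ^ k" using k(1) by blast
  qed
  define kk where "kk = (\<lambda>i. SOME k. k < K \<and> f i = z ^ k)"
  have kk: "\<And>i. i \<in> I' \<Longrightarrow> kk i < K \<and> f i = z ^ kk i"
    unfolding kk_def by (rule someI_ex, rule ex)
  have sI: "(\<Sum>i\<in>I. f i) = (\<Sum>i\<in>I'. z ^ kk i)"
  proof -
    have "(\<Sum>i\<in>I. f i) = (\<Sum>i\<in>I'. f i)"
      unfolding I'_def using finI by (intro sum.mono_neutral_right) auto
    also have "\<dots> = (\<Sum>i\<in>I'. z ^ kk i)" using kk by simp
    finally show ?thesis .
  qed
  define s where "s = (\<Sum>i\<in>I'. z ^ kk i)"
  define M :: "int mat" where "M = mat K K (\<lambda>(l,m). \<Sum>i\<in>I'. if (kk i + l) mod K = m then 1 else 0)"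
  have M: "M \<in> carrier_mat K K" unfolding M_def by simp
  define v where "v = vec K (\<lambda>l. z ^ l)"
  have zmod: "\<And>x. z ^ (x mod K) = z ^ x"
  proof -
    fix x
    have "z ^ x = z ^ (x mod K + K * (x div K))" by (simp only: mod_mult_div_eq)
    also have "\<dots> = z ^ (x mod K)" by (simp only: power_add power_mult zK power_one mult_1_right)
    finally show "z ^ (x mod K) = z ^ x" by simp
  qed
  have "map_mat of_int M *\<^sub>v v = s \<cdot>\<^sub>v v"
  proof (rule eq_vecI)
    fix l assume "l < dim_vec (s \<cdot>\<^sub>v v)"
    then have l: "l < K" unfolding v_def by simp
    have "(map_mat of_int M *\<^sub>v v) $ l = (\<Sum>m<K. of_int (M $$ (l,m)) * z ^ m)"
      using M l unfolding v_def by (simp add: scalar_prod_def atLeast0LessThan)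
    also have "\<dots> = (\<Sum>m<K. \<Sum>i\<in>I'. if (kk i + l) mod K = m then z ^ m else 0)"
      unfolding M_def using l by (simp add: of_int_sum sum_distrib_right of_int_if cong: if_cong)
    also have "\<dots> = (\<Sum>i\<in>I'. \<Sum>m<K. if (kk i + l) mod K = m then z ^ m else 0)"
      by (rule sum.swap)
    also have "\<dots> = (\<Sum>i\<in>I'. z ^ ((kk i + l) mod K))"
      using K by (intro sum.cong refl) (simp add: sum.delta')
    also have "\<dots> = (\<Sum>i\<in>I'. z ^ kk i * z ^ l)" by (simp add: zmod power_add)
    also have "\<dots> = s * z ^ l" unfolding s_def by (simp add: sum_distrib_right)
    also have "\<dots> = (s \<cdot>\<^sub>v v) $ l" unfolding v_def using l by simp
    finally show "(map_mat of_int M *\<^sub>v v) $ l = (s \<cdot>\<^sub>v v) $ l" .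
  qed (use M in \<open>simp add: v_def\<close>)
  moreover have "v \<in> carrier_vec K" unfolding v_def by simp
  moreover have "v \<noteq> 0\<^sub>v K"
  proof
    assume "v = 0\<^sub>v K"
    then have "v $ 0 = 0" using K by simp
    then show False unfolding v_def using K by simp
  qed
  ultimately have "eigenvalue (map_mat of_int M) s"
    unfolding eigenvalue_def eigenvector_def using M by auto
  moreover have "s \<in> \<rat>" using sq sI unfolding s_def by simp
  ultimately have "s \<in> \<int>" by (rule int_eigen_rat[OF M])
  then show ?thesis using sI unfolding s_def by simp
qed

lemma trace_eigen:
  fixes A :: "complex mat"
  assumes A: "A \<in> carrier_mat n n"
  shows "\<exists>T. T \<in> carrier_mat n n \<and> mat_trace A = (\<Sum>i<n. T $$ (i,i)) \<and> (\<forall>i<n. eigenvalue A (T $$ (i,i)))"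
proof -
  obtain es where es: "char_poly A = (\<Prod>a\<leftarrow>es. pCons (- a) (pCons 1 0))"
    using char_poly_factorized[OF A] by blast
  note su = schur_upper_triangular[OF A es]
  define T where "T = schur_upper_triangular A es"
  have T: "T \<in> carrier_mat n n" and ut: "upper_triangular T" and sim: "similar_mat A T"
    using su unfolding T_def by auto
  obtain P Q where PQ: "similar_mat_wit A T P Q" using sim unfolding similar_mat_def by blast
  have P: "P \<in> carrier_mat n n" and Q: "Q \<in> carrier_mat n n" and QP: "Q * P = 1\<^sub>m n" and APTQ: "A = P * T * Q"
    using PQ A unfolding similar_mat_wit_def Let_def by auto
  have "mat_trace A = mat_trace (P * (T * Q))" using APTQ P T Q by (simp add: assoc_mult_mat[OF P T Q])
  also have "\<dots> = mat_trace ((T * Q) * P)" using P T Q by (intro mat_trace_mult_comm[of _ n n]) auto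
  also have "(T * Q) * P = T" using T Q P QP by (simp add: assoc_mult_mat[OF T Q P])
  finally have tr: "mat_trace A = (\<Sum>i<n. T $$ (i,i))" unfolding mat_trace_def using T by simp
  have cpT: "char_poly A = char_poly T" by (rule char_poly_similar[OF sim])
  have "\<forall>i<n. eigenvalue A (T $$ (i,i))"
  proof (intro allI impI)
    fix i assume i: "i < n"
    have "char_poly T = (\<Prod>a\<leftarrow>diag_mat T. pCons (- a) (pCons 1 0))"
      by (rule char_poly_upper_triangular[OF T ut])
    moreover have "T $$ (i,i) \<in> set (diag_mat T)" using T i unfolding diag_mat_def by auto
    ultimately have "poly (char_poly T) (T $$ (i,i)) = 0"
      by (simp add: poly_prod_list prod_list_zero_iff)
    then show "eigenvalue A (T $$ (i,i))" using eigenvalue_root_char_poly[OF A] cpT by simp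
  qed
  then show ?thesis using T tr by blast
qed


context fgrp
begin

lemma pow_NN: "g \<in> NN \<Longrightarrow> g [^] (j::nat) \<in> NN"
proof (induction j)
  case 0 then show ?case using subgroup.one_closed[OF NN_sub] by simp
next
  case (Suc j) then show ?case using subgroup.m_closed[OF NN_sub] by simp
qed

lemma pow_period: assumes g: "g \<in> carrier G" shows "\<exists>K>0. g [^] (K::nat) = \<one>"
proof -
  have "\<not> inj_on (\<lambda>i::nat. g [^] i) {..ng}"
  proof
    assume "inj_on (\<lambda>i::nat. g [^] i) {..ng}"
    moreover have "(\<lambda>i::nat. g [^] i) ` {..ng} \<subseteq> carrier G" using g by auto
    ultimately have "card {..ng} \<le> ng" using card_inj_on_le[of _ "{..ng}" "carrier G"] fin by blast
    then show False by simp
  qed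
  then obtain i j where ij: "i \<le> ng" "j \<le> ng" "i \<noteq> j" "g [^] i = g [^] j"
    unfolding inj_on_def by auto
  have "\<exists>a b. a < b \<and> g [^] a = g [^] (b::nat)"
  proof (cases "i < j")
    case True then show ?thesis using ij by blast
  next
    case False then have "j < i" using ij by simp
    then show ?thesis using ij by metis
  qed
  then obtain a b where ab: "a < b" "g [^] a = g [^] (b::nat)" by blast
  have "g [^] a \<otimes> g [^] (b - a) = g [^] b"
    using g ab(1) nat_pow_mult[of g a "b - a"] by simp
  then have "g [^] a \<otimes> g [^] (b - a) = g [^] a" using ab(2) by simp
  then have "g [^] (b - a) = \<one>" using g by simp
  then show ?thesis using ab by (intro exI[of _ "b - a"]) simp
qed

lemma pow_one_nat: "g \<in> carrier G \<Longrightarrow> g [^] (1::nat) = g"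
  using nat_pow_Suc[of g 0] by simp

lemma NN_carr: "x \<in> NN \<Longrightarrow> x \<in> carrier G" using NN_carrier by blast

lemma integrality:
  assumes gN: "g \<in> NN"
  shows "of_nat (card NN) * E_deg G d g \<in> \<int>"
proof -
  let ?E = "E_deg G d"
  have g: "g \<in> carrier G" using NN_carr[OF gN] .
  obtain e where e: "bij_betw e {..<ng} (carrier G)" using enum_G by blast
  have ein: "\<And>i. i < ng \<Longrightarrow> e i \<in> carrier G" using e unfolding bij_betw_def by auto
  define Y where "Y = (\<lambda>j::nat. mat ng ng (\<lambda>(a,b). if e b \<in> NN then ?E (inv (e b) \<otimes> (g [^] j) \<otimes> e a) else 0))"
  have Yc: "\<And>j. Y j \<in> carrier_mat ng ng" unfolding Y_def by simp
  have Ydim: "\<And>j. dim_row (Y j) = ng" unfolding Y_def by simp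
  have reidx: "\<And>F. (\<Sum>b<ng. F (e b)) = (\<Sum>y\<in>carrier G. F y)"
    using sum.reindex_bij_betw[OF e] by blast
  have YY: "\<And>i j. Y i * Y j = Y (i + j)"
  proof -
    fix i j
    show "Y i * Y j = Y (i + j)"
    proof (rule eq_matI)
      fix a c assume a: "a < dim_row (Y (i + j))" and c: "c < dim_col (Y (i + j))"
      have a': "a < ng" and c': "c < ng" using a c unfolding Y_def by auto
      have ea: "e a \<in> carrier G" and ec: "e c \<in> carrier G" using ein a' c' by auto
      have gi: "g [^] i \<in> carrier G" and gj: "g [^] j \<in> carrier G" using g by auto
      have "(Y i * Y j) $$ (a,c) = (\<Sum>b<ng. Y i $$ (a,b) * Y j $$ (b,c))"
        by (rule mat_mult_entry[OF Yc Yc a' c'])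
      also have "\<dots> = (\<Sum>b<ng. (if e b \<in> NN then ?E (inv (e b) \<otimes> (g [^] i) \<otimes> e a) else 0) *
            (if e c \<in> NN then ?E (inv (e c) \<otimes> (g [^] j) \<otimes> e b) else 0))"
        unfolding Y_def using a' c' by (intro sum.cong refl) simp
      also have "\<dots> = (\<Sum>y\<in>carrier G. (if y \<in> NN then ?E (inv y \<otimes> (g [^] i) \<otimes> e a) else 0) *
            (if e c \<in> NN then ?E (inv (e c) \<otimes> (g [^] j) \<otimes> y) else 0))"
        by (rule reidx)
      also have "\<dots> = (if e c \<in> NN then ?E (inv (e c) \<otimes> (g [^] (i + j)) \<otimes> e a) else 0)"
      proof (cases "e c \<in> NN")
        case False then show ?thesis by simp
      next
        case True
        define k where "k = inv (e c) \<otimes> (g [^] j)"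
        have k: "k \<in> carrier G" unfolding k_def using ec gj by simp
        have kN: "k \<in> NN" unfolding k_def
          using True pow_NN[OF gN] subgroup.m_closed[OF NN_sub] subgroup.m_inv_closed[OF NN_sub] by blast
        have "(\<Sum>y\<in>carrier G. (if y \<in> NN then ?E (inv y \<otimes> (g [^] i) \<otimes> e a) else 0) *
            (if e c \<in> NN then ?E (inv (e c) \<otimes> (g [^] j) \<otimes> y) else 0)) =
            (\<Sum>y\<in>carrier G. ?E (inv y \<otimes> (g [^] i) \<otimes> e a) * ?E (k \<otimes> y))"
        proof (rule sum.cong[OF refl])
          fix y assume y: "y \<in> carrier G"
          have kk: "inv (e c) \<otimes> (g [^] j) \<otimes> y = k \<otimes> y" unfolding k_def by simp
          show "(if y \<in> NN then ?E (inv y \<otimes> (g [^] i) \<otimes> e a) else 0) *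
            (if e c \<in> NN then ?E (inv (e c) \<otimes> (g [^] j) \<otimes> y) else 0) =
            ?E (inv y \<otimes> (g [^] i) \<otimes> e a) * ?E (k \<otimes> y)"
          proof (cases "y \<in> NN")
            case True' : True
            then show ?thesis using True kk by simp
          next
            case False
            have "k \<otimes> y \<notin> NN"
            proof
              assume "k \<otimes> y \<in> NN"
              then have "inv k \<otimes> (k \<otimes> y) \<in> NN"
                using kN subgroup.m_closed[OF NN_sub] subgroup.m_inv_closed[OF NN_sub] by blast
              then show False using False k y by (simp add: m_assoc[symmetric])
            qed
            then have "?E (k \<otimes> y) = 0" using E_supp k y by simp
            then show ?thesis using False by simp
          qed
        qed
        also have "\<dots> = (\<Sum>w\<in>carrier G. ?E (inv (inv k \<otimes> w) \<otimes> (g [^] i) \<otimes> e a) * ?E (k \<otimes> (inv k \<otimes> w)))"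
          by (rule sum_lmult[OF inv_closed[OF k], symmetric])
        also have "\<dots> = (\<Sum>w\<in>carrier G. ?E w * ?E (inv w \<otimes> (inv (e c) \<otimes> (g [^] (i + j)) \<otimes> e a)))"
        proof (rule sum.cong[OF refl])
          fix w assume w: "w \<in> carrier G"
          have "k \<otimes> (inv k \<otimes> w) = w" using k w by (simp add: m_assoc[symmetric])
          moreover have "inv (inv k \<otimes> w) \<otimes> (g [^] i) \<otimes> e a = inv w \<otimes> (inv (e c) \<otimes> (g [^] (i + j)) \<otimes> e a)"
          proof -
            have "inv (inv k \<otimes> w) = inv w \<otimes> k" using k w by (simp add: inv_mult_group)
            moreover have "(g [^] j) \<otimes> (g [^] i) = g [^] (i + j)" using g by (simp add: nat_pow_mult add.commute)
            ultimately show ?thesis unfolding k_def using w ec gi gj ea g by (simp add: m_assoc)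
          qed
          ultimately show "?E (inv (inv k \<otimes> w) \<otimes> (g [^] i) \<otimes> e a) * ?E (k \<otimes> (inv k \<otimes> w)) =
              ?E w * ?E (inv w \<otimes> (inv (e c) \<otimes> (g [^] (i + j)) \<otimes> e a))" by (simp add: mult.commute)
        qed
        also have "\<dots> = conv ?E ?E (inv (e c) \<otimes> (g [^] (i + j)) \<otimes> e a)" unfolding conv_def by simp
        also have "\<dots> = ?E (inv (e c) \<otimes> (g [^] (i + j)) \<otimes> e a)" using E_idem ec ea g by simp
        finally show ?thesis using True by simp
      qed
      also have "\<dots> = Y (i + j) $$ (a,c)" unfolding Y_def using a' c' by simp
      finally show "(Y i * Y j) $$ (a,c) = Y (i + j) $$ (a,c)" .
    qed (simp_all add: Y_def)
  qed
  obtain K :: nat where K: "K > 0" "g [^] K = \<one>" using pow_period[OF g] by blast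
  have Yper: "Y (Suc K) = Y 1"
  proof -
    have e1: "g [^] (Suc K) = g [^] (1::nat)" using g K by simp
    show ?thesis unfolding Y_def by (simp only: e1)
  qed
  have ev: "\<And>\<mu>. eigenvalue (Y 1) \<mu> \<Longrightarrow> \<mu> = 0 \<or> \<mu> ^ K = 1"
  proof -
    fix \<mu> assume "eigenvalue (Y 1) \<mu>"
    then obtain v where v: "v \<in> carrier_vec ng" "v \<noteq> 0\<^sub>v ng" "Y 1 *\<^sub>v v = \<mu> \<cdot>\<^sub>v v"
      unfolding eigenvalue_def eigenvector_def Ydim by blast
    have pw: "\<And>j. Y (Suc j) *\<^sub>v v = \<mu> ^ (Suc j) \<cdot>\<^sub>v v"
    proof -
      fix j show "Y (Suc j) *\<^sub>v v = \<mu> ^ (Suc j) \<cdot>\<^sub>v v"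
      proof (induction j)
        case 0 then show ?case using v by simp
      next
        case (Suc j)
        have "Y (Suc (Suc j)) = Y (Suc j) * Y 1" using YY[of "Suc j" 1] by simp
        then have "Y (Suc (Suc j)) *\<^sub>v v = Y (Suc j) *\<^sub>v (Y 1 *\<^sub>v v)"
          using Yc v by (simp add: assoc_mult_mat_vec[of _ ng ng _ ng])
        also have "\<dots> = Y (Suc j) *\<^sub>v (\<mu> \<cdot>\<^sub>v v)" using v by simp
        also have "\<dots> = \<mu> \<cdot>\<^sub>v (Y (Suc j) *\<^sub>v v)" by (rule mult_mat_vec[OF Yc v(1)])
        also have "\<dots> = \<mu> ^ Suc (Suc j) \<cdot>\<^sub>v v" using Suc by (simp add: smult_smult_assoc)
        finally show ?case .
      qed
    qed
    have "\<mu> ^ (Suc K) \<cdot>\<^sub>v v = \<mu> \<cdot>\<^sub>v v" using pw[of K] v(3) Yper by simp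
    moreover obtain i where i: "i < ng" "v $ i \<noteq> 0" using v by (metis carrier_vecD eq_vecI index_zero_vec(1,2))
    ultimately have "\<mu> ^ (Suc K) * v $ i = \<mu> * v $ i" using v(1)
      by (metis carrier_vecD index_smult_vec(1))
    then have "\<mu> ^ (Suc K) = \<mu>" using i by simp
    then have "\<mu> * (\<mu> ^ K - 1) = 0" by (simp add: algebra_simps)
    then show "\<mu> = 0 \<or> \<mu> ^ K = 1" by simp
  qed
  have tr: "mat_trace (Y 1) = of_nat (card NN) * ?E g"
  proof -
    have "mat_trace (Y 1) = (\<Sum>a<ng. if e a \<in> NN then ?E (inv (e a) \<otimes> g \<otimes> e a) else 0)"
      unfolding mat_trace_def Y_def by (simp only: pow_one_nat[OF g] dim_row_mat index_mat case_prod_conv) (rule sum.cong, auto)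
    also have "\<dots> = (\<Sum>y\<in>carrier G. if y \<in> NN then ?E (inv y \<otimes> g \<otimes> y) else 0)"
      by (rule reidx)
    also have "\<dots> = (\<Sum>y\<in>carrier G. if y \<in> NN then ?E g else 0)"
    proof (rule sum.cong[OF refl])
      fix y assume y: "y \<in> carrier G"
      have "?E (inv y \<otimes> g \<otimes> inv (inv y)) = ?E g" using E_class[OF inv_closed[OF y] g] .
      then show "(if y \<in> NN then ?E (inv y \<otimes> g \<otimes> y) else 0) = (if y \<in> NN then ?E g else 0)" using y by simp
    qed
    also have "\<dots> = (\<Sum>y\<in>NN. ?E g)"
      using NN_carrier fin by (simp add: sum.If_cases Int_absorb1)
    also have "\<dots> = of_nat (card NN) * ?E g" by simp
    finally show ?thesis .
  qed
  obtain T where T: "T \<in> carrier_mat ng ng" "mat_trace (Y 1) = (\<Sum>i<ng. T $$ (i,i))"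
    "\<forall>i<ng. eigenvalue (Y 1) (T $$ (i,i))" using trace_eigen[OF Yc] by blast
  have "(\<Sum>i<ng. T $$ (i,i)) \<in> \<int>"
  proof (rule roots_unity_int)
    show "finite {..<ng}" by simp
    show "K > 0" by (rule K(1))
    show "\<And>i. i \<in> {..<ng} \<Longrightarrow> T $$ (i,i) = 0 \<or> T $$ (i,i) ^ K = 1" using T(3) ev by blast
    show "(\<Sum>i<ng. T $$ (i,i)) \<in> \<rat>" using T(2) tr E_rat[OF g] by simp
  qed
  then show ?thesis using T(2) tr by simp
qed

end

theorem lemma3p7:
  fixes G :: "('a, 'b) monoid_scheme" and d :: nat
  assumes "group G" and "finite (carrier G)"
  shows "\<forall>g\<in>carrier G.
           of_nat (card (derived G (carrier G))) * E_deg G d g \<in> \<int> \<and>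
           (g \<notin> derived G (carrier G) \<longrightarrow> E_deg G d g = 0)"
proof -
  interpret fgrp G using assms by (simp add: fgrp_def fgrp_axioms_def)
  show ?thesis
  proof
    fix g assume g: "g \<in> carrier G"
    show "of_nat (card (derived G (carrier G))) * E_deg G d g \<in> \<int> \<and>
           (g \<notin> derived G (carrier G) \<longrightarrow> E_deg G d g = 0)"
    proof (cases "g \<in> derived G (carrier G)")
      case True
      then show ?thesis using integrality by simp
    next
      case False
      then show ?thesis using E_supp[OF g] by simp
    qed
  qed
qed


end
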